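(* For every $q\ge0$, the $W(m,n)$-module $\mathcal V(\theta_q)$ is generated by the single vector $y_n\otimes(e^*_{m+n})^q\otimes1_{\mathcal E}$.
   Context: $\mathbb F$ algebraically closed of characteristic $0$, $m,n\ge1$. $\mathcal R=\mathbb F[x_1,\dots,x_m]\otimes\Lambda(y_1,\dots,y_n)$ ($x_i$ even, $y_s$ odd). $\mathfrak g=W(m,n)$ the Lie superalgebra of superderivations of $\mathcal R$, free over $\mathcal R$ on even $\partial_i$ and odd $D_t$, with $\mathfrak g_0\cong\mathfrak{gl}(m|n)$ via $x_i\partial_j\mapsto E_{ij}$, $x_iD_s\mapsto E_{i,m+s}$, $y_r\partial_j\mapsto E_{m+r,j}$, $y_rD_s\mapsto E_{m+r,m+s}$; weights $\epsilon_i,\delta_s$ as usual. $\mathcal E=\sum_{i=1}^m\epsilon_i-\sum_{j=1}^n\delta_j$ and $\theta_q=\mathcal E-q\delta_n$. $V^*$ is the dual of the natural module $V=\mathbb F^{m|n}$ with dual basis $e^*_i$ ($e_i^*$ even iff $i\le m$), action $(X.f)(v)=-(-1)^{\wp(X)\wp(f)}f(Xv)$; $\Omega^q(V^* )$ its $q$-th super-Grassmann power (tensor algebra modulo $u\otimes w+(-1)^{\wp(u)\wp(w)}w\otimes u$); $\mathbb F_{\mathcal E}=\mathbb F1_{\mathcal E}$ the one-dimensional $\mathfrak{gl}(m|n)$-module of weight $\mathcal E$. Then $L^0(\theta_q)=\Omega^q(V^* )\otimes\mathbb F_{\mathcal E}$ is irreducible of highest weight $\theta_q$. $\mathcal V(\theta_q)=\mathcal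 R\otimes L^0(\theta_q)$ is the mixed-product module with action (homogeneous $f,g$, $\xi$ the $\mathfrak g_0$-action): $f\partial_i.(g\otimes v)=f\partial_i(g)\otimes v+\sum_j\partial_j(f)g\otimes\xi(x_j\partial_i)v+(-1)^{\wp(f)+\wp(g)+1}\sum_jD_j(f)g\otimes\xi(y_j\partial_i)v$, $fD_i.(g\otimes v)=fD_i(g)\otimes v+(-1)^{\wp(g)}\sum_j\partial_j(f)g\otimes\xi(x_jD_i)v+(-1)^{\wp(f)+1}\sum_jD_j(f)g\otimes\xi(y_jD_i)v$. *)

theory Defs
  imports "HOL-Computational_Algebra.Polynomial"
begin

(* Basis monomials of R = F[x_1..x_m] \<otimes> Lambda(y_1..y_n):
   (alpha, S) stands for x^alpha * y_{s_1} ... y_{s_k}, s_1 < ... < s_k, S = {s_1,...,s_k}. *)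
type_synonym rmon = "(nat \<Rightarrow> nat) \<times> nat set"
(* Basis of R \<otimes> T^q(Vdual): a monomial of R and a word e*_{w_1} \<otimes> ... \<otimes> e*_{w_q} *)
type_synonym bidx = "rmon \<times> nat list"

definition valid_rmon :: "nat \<Rightarrow> nat \<Rightarrow> rmon \<Rightarrow> bool" where
  "valid_rmon m n \<mu> \<longleftrightarrow> (\<forall>i. fst \<mu> i \<noteq> 0 \<longrightarrow> 1 \<le> i \<and> i \<le> m) \<and> snd \<mu> \<subseteq> {1..n}"

definition rpar :: "rmon \<Rightarrow> nat" where
  "rpar \<mu> = card (snd \<mu>) mod 2"

definition vpar :: "nat \<Rightarrow> nat \<Rightarrow> nat" where
  "vpar m c = (if c \<le> m then 0 else 1)"

definition mul_mon :: "rmon \<Rightarrow> rmon \<Rightarrow> 'a::comm_ring_1 \<times> rmon" where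
  "mul_mon \<mu> \<nu> = (if snd \<mu> \<inter> snd \<nu> = {}
     then ((-1) ^ card {(s,t). s \<in> snd \<mu> \<and> t \<in> snd \<nu> \<and> t < s},
           (\<lambda>i. fst \<mu> i + fst \<nu> i, snd \<mu> \<union> snd \<nu>))
     else (0, \<mu>))"

definition dx :: "nat \<Rightarrow> rmon \<Rightarrow> 'a::comm_ring_1 \<times> rmon" where
  "dx i \<mu> = (of_nat (fst \<mu> i), ((fst \<mu>)(i := fst \<mu> i - 1), snd \<mu>))"

(* D_t (odd derivation, d/dy_t from the left) applied to a monomial *)
definition dy :: "nat \<Rightarrow> rmon \<Rightarrow> 'a::comm_ring_1 \<times> rmon" where
  "dy t \<mu> = (if t \<in> snd \<mu> then ((-1) ^ card {s \<in> snd \<mu>. s < t}, (fst \<mu>, snd \<mu> - {t}))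
             else (0, \<mu>))"

definition sv :: "'a::zero \<Rightarrow> 'b \<Rightarrow> 'b \<Rightarrow> 'a" where
  "sv c b = (\<lambda>b'. if b' = b then c else 0)"

definition tens :: "(rmon \<Rightarrow> 'a::times) \<Rightarrow> (nat list \<Rightarrow> 'a) \<Rightarrow> bidx \<Rightarrow> 'a" where
  "tens g t = (\<lambda>(\<nu>, w). g \<nu> * t w)"

definition lterm :: "'a::comm_ring_1 \<times> rmon \<Rightarrow> rmon \<Rightarrow> (nat list \<Rightarrow> 'a) \<Rightarrow> bidx \<Rightarrow> 'a" where
  "lterm p \<nu> t = (case p of (c1, \<rho>1) \<Rightarrow>
     (case mul_mon \<rho>1 \<nu> of (c2, \<rho>2) \<Rightarrow> tens (sv (c1 * c2) \<rho>2) t))"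

definition rterm :: "rmon \<Rightarrow> 'a::comm_ring_1 \<times> rmon \<Rightarrow> (nat list \<Rightarrow> 'a) \<Rightarrow> bidx \<Rightarrow> 'a" where
  "rterm \<mu> p t = (case p of (c1, \<rho>1) \<Rightarrow>
     (case mul_mon \<mu> \<rho>1 of (c2, \<rho>2) \<Rightarrow> tens (sv (c1 * c2) \<rho>2) t))"

(* action of the matrix unit E_{ab} of gl(m|n) on the basis word w of
   T^q(Vdual) \<otimes> F_E  (the F_E factor is identified with F, contributing
   the supertrace weight E on the diagonal).  E_{ab} e*_c = -(-1)^{p(E_ab) p(c)} delta_{ac} e*_b,
   extended to tensors with the Koszul sign rule. *)
definition xi :: "nat \<Rightarrow> nat \<Rightarrow> nat \<Rightarrow> nat list \<Rightarrow> nat list \<Rightarrow> 'a::comm_ring_1" where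
  "xi m a b w = (\<lambda>w'.
     (\<Sum>k\<in>{k. k < length w \<and> w ! k = a \<and> w' = w[k := b]}.
        - ((-1) ^ ((vpar m a + vpar m b) * (vpar m a + (\<Sum>l<k. vpar m (w ! l))))))
     + (if a = b \<and> w' = w then (if a \<le> m then 1 else -1) else 0))"

(* action of f partial_i (f the monomial mu) on the basis vector g \<otimes> w, g = nu *)
definition act_d :: "nat \<Rightarrow> nat \<Rightarrow> nat \<Rightarrow> rmon \<Rightarrow> bidx \<Rightarrow> bidx \<Rightarrow> 'a::comm_ring_1" where
  "act_d m n i \<mu> b = (case b of (\<nu>, w) \<Rightarrow> (\<lambda>b'.
      rterm \<mu> (dx i \<nu>) (sv 1 w) b'
    + (\<Sum>j\<in>{1..m}. lterm (dx j \<mu>) \<nu> (xi m j i w) b')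
    + (-1) ^ (rpar \<mu> + rpar \<nu> + 1) * (\<Sum>j\<in>{1..n}. lterm (dy j \<mu>) \<nu> (xi m (m + j) i w) b')))"

(* action of f D_i (f the monomial mu) on the basis vector g \<otimes> w, g = nu *)
definition act_D :: "nat \<Rightarrow> nat \<Rightarrow> nat \<Rightarrow> rmon \<Rightarrow> bidx \<Rightarrow> bidx \<Rightarrow> 'a::comm_ring_1" where
  "act_D m n i \<mu> b = (case b of (\<nu>, w) \<Rightarrow> (\<lambda>b'.
      rterm \<mu> (dy i \<nu>) (sv 1 w) b'
    + (-1) ^ (rpar \<nu>) * (\<Sum>j\<in>{1..m}. lterm (dx j \<mu>) \<nu> (xi m j (m + i) w) b')
    + (-1) ^ (rpar \<mu> + 1) * (\<Sum>j\<in>{1..n}. lterm (dy j \<mu>) \<nu> (xi m (m + j) (m + i) w) b')))"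

definition lin_ext :: "(bidx \<Rightarrow> bidx \<Rightarrow> 'a::comm_ring_1) \<Rightarrow> (bidx \<Rightarrow> 'a) \<Rightarrow> bidx \<Rightarrow> 'a" where
  "lin_ext B v = (\<lambda>b'. \<Sum>b\<in>{b. v b \<noteq> 0}. v b * B b b')"

(* An element of W(m,n): sum_i f_i partial_i + sum_t g_t D_t, given by coefficient vectors in R *)
type_synonym 'a welt = "(nat \<Rightarrow> rmon \<Rightarrow> 'a) \<times> (nat \<Rightarrow> rmon \<Rightarrow> 'a)"

definition valid_W :: "nat \<Rightarrow> nat \<Rightarrow> 'a::zero welt \<Rightarrow> bool" where
  "valid_W m n X \<longleftrightarrow>
     (\<forall>i. finite {\<mu>. fst X i \<mu> \<noteq> 0} \<and>
          (\<forall>\<mu>. fst X i \<mu> \<noteq> 0 \<longrightarrow> 1 \<le> i \<and> i \<le> m \<and> valid_rmon m n \<mu>)) \<and>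
     (\<forall>i. finite {\<mu>. snd X i \<mu> \<noteq> 0} \<and>
          (\<forall>\<mu>. snd X i \<mu> \<noteq> 0 \<longrightarrow> 1 \<le> i \<and> i \<le> n \<and> valid_rmon m n \<mu>))"

definition act :: "nat \<Rightarrow> nat \<Rightarrow> 'a::comm_ring_1 welt \<Rightarrow> (bidx \<Rightarrow> 'a) \<Rightarrow> bidx \<Rightarrow> 'a" where
  "act m n X v = (\<lambda>b'.
      (\<Sum>i\<in>{1..m}. \<Sum>\<mu>\<in>{\<mu>. fst X i \<mu> \<noteq> 0}. fst X i \<mu> * lin_ext (act_d m n i \<mu>) v b')
    + (\<Sum>i\<in>{1..n}. \<Sum>\<mu>\<in>{\<mu>. snd X i \<mu> \<noteq> 0}. snd X i \<mu> * lin_ext (act_D m n i \<mu>) v b'))"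

(* R \<otimes> T^q(Vdual) \<otimes> F_E, as finitely supported coefficient functions *)
definition Mcar :: "nat \<Rightarrow> nat \<Rightarrow> nat \<Rightarrow> (bidx \<Rightarrow> 'a::zero) set" where
  "Mcar m n q = {v. finite {b. v b \<noteq> 0} \<and>
      (\<forall>b. v b \<noteq> 0 \<longrightarrow> valid_rmon m n (fst b) \<and> length (snd b) = q \<and> set (snd b) \<subseteq> {1..m+n})}"

(* spanning set of R \<otimes> (degree-q part of the ideal of super-Grassmann relations) *)
definition Krel :: "nat \<Rightarrow> nat \<Rightarrow> nat \<Rightarrow> (bidx \<Rightarrow> 'a::comm_ring_1) set" where
  "Krel m n q = {tens (sv 1 \<nu>)
        (\<lambda>w'. (if w' = a @ [c, d] @ e then 1 else 0)
            + (if w' = a @ [d, c] @ e then (-1) ^ (vpar m c * vpar m d) else 0))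
      | \<nu> a c d e. valid_rmon m n \<nu> \<and> length a + length e + 2 = q \<and> set (a @ [c, d] @ e) \<subseteq> {1..m+n}}"

inductive_set lspan :: "('b \<Rightarrow> 'a::comm_ring_1) set \<Rightarrow> ('b \<Rightarrow> 'a) set" for A where
  zero: "(\<lambda>_. 0) \<in> lspan A"
| comb: "v \<in> A \<Longrightarrow> x \<in> lspan A \<Longrightarrow> (\<lambda>b. c * v b + x b) \<in> lspan A"

inductive_set gen_sub :: "nat \<Rightarrow> nat \<Rightarrow> (bidx \<Rightarrow> 'a::comm_ring_1) \<Rightarrow> (bidx \<Rightarrow> 'a) set"
  for m n v0 where
  base: "v0 \<in> gen_sub m n v0"
| add: "u \<in> gen_sub m n v0 \<Longrightarrow> w \<in> gen_sub m n v0 \<Longrightarrow> (\<lambda>b. u b + w b) \<in> gen_sub m n v0"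
| smul: "u \<in> gen_sub m n v0 \<Longrightarrow> (\<lambda>b. c * u b) \<in> gen_sub m n v0"
| action: "u \<in> gen_sub m n v0 \<Longrightarrow> valid_W m n X \<Longrightarrow> act m n X u \<in> gen_sub m n v0"

definition vgen :: "nat \<Rightarrow> nat \<Rightarrow> nat \<Rightarrow> bidx \<Rightarrow> 'a::comm_ring_1" where
  "vgen m n q = tens (sv 1 (\<lambda>_. 0, {n})) (sv 1 (replicate q (m + n)))"

end

theory Submission
  imports Defs
begin

definition fs :: "('b \<Rightarrow> 'a::zero) \<Rightarrow> bool" where "fs v \<longleftrightarrow> finite {b. v b \<noteq> 0}"

lemma lspan_base: "v \<in> A \<Longrightarrow> v \<in> lspan A"
  using lspan.comb[OF _ lspan.zero, of v A 1] by simp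

lemma lspan_add: "x \<in> lspan A \<Longrightarrow> y \<in> lspan A \<Longrightarrow> (\<lambda>b. x b + y b) \<in> lspan A"
proof (induction x rule: lspan.induct)
  case zero then show ?case by simp
next
  case (comb v x c)
  have "(\<lambda>b. c * v b + x b + y b) = (\<lambda>b. c * v b + (x b + y b))" by (simp add: add.assoc)
  then show ?case using lspan.comb[OF comb.hyps(1) comb.IH[OF comb.prems], of c] by simp
qed

lemma lspan_smul: "x \<in> lspan A \<Longrightarrow> (\<lambda>b. c * x b) \<in> lspan A"
proof (induction x rule: lspan.induct)
  case zero then show ?case using lspan.zero by simp
next
  case (comb v x d)
  have "(\<lambda>b. c * (d * v b + x b)) = (\<lambda>b. (c*d) * v b + c * x b)" by (simp add: algebra_simps)
  then show ?case using lspan.comb[OF comb(1) comb(3), of "c*d"] by simp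
qed

lemma lspan_sum: "finite I \<Longrightarrow> (\<And>i. i \<in> I \<Longrightarrow> f i \<in> lspan A) \<Longrightarrow> (\<lambda>b. \<Sum>i\<in>I. f i b) \<in> lspan A"
proof (induction I rule: finite_induct)
  case empty then show ?case using lspan.zero by simp
next
  case (insert i I)
  then show ?case using lspan_add[of "f i" A "\<lambda>b. \<Sum>i\<in>I. f i b"] by simp
qed

lemma lspan_fs: "x \<in> lspan A \<Longrightarrow> (\<And>v. v \<in> A \<Longrightarrow> fs v) \<Longrightarrow> fs x"
proof (induction x rule: lspan.induct)
  case zero then show ?case by (simp add: fs_def)
next
  case (comb v x c)
  have "{b. c * v b + x b \<noteq> 0} \<subseteq> {b. v b \<noteq> 0} \<union> {b. x b \<noteq> 0}" by auto
  then show ?case using comb by (auto simp: fs_def intro: finite_subset)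
qed

definition NN :: "nat \<Rightarrow> nat \<Rightarrow> nat \<Rightarrow> (bidx \<Rightarrow> 'a::comm_ring_1) set" where
  "NN m n q = {v. \<exists>u\<in>gen_sub m n (vgen m n q). \<exists>k\<in>lspan (Krel m n q). v = (\<lambda>b. u b + k b)}"

lemma gen_zero: "(\<lambda>b. 0) \<in> gen_sub m n v0"
  using gen_sub.smul[OF gen_sub.base, of 0] by simp

lemma NN_I: "u \<in> gen_sub m n (vgen m n q) \<Longrightarrow> k \<in> lspan (Krel m n q) \<Longrightarrow> v = (\<lambda>b. u b + k b) \<Longrightarrow> v \<in> NN m n q"
  unfolding NN_def by blast

lemma NN_E: "v \<in> NN m n q \<Longrightarrow> (\<And>u k. u \<in> gen_sub m n (vgen m n q) \<Longrightarrow> k \<in> lspan (Krel m n q) \<Longrightarrow> v = (\<lambda>b. u b + k b) \<Longrightarrow> P) \<Longrightarrow> P"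
  unfolding NN_def by blast

lemma NN_gen: "u \<in> gen_sub m n (vgen m n q) \<Longrightarrow> u \<in> NN m n q"
  by (rule NN_I[OF _ lspan.zero]) auto

lemma NN_lspan: "k \<in> lspan (Krel m n q) \<Longrightarrow> k \<in> NN m n q"
  by (rule NN_I[OF gen_zero]) auto

lemma NN_zero: "(\<lambda>b. 0) \<in> NN m n q"
  using NN_gen gen_zero by blast

lemma NN_add: "x \<in> NN m n q \<Longrightarrow> y \<in> NN m n q \<Longrightarrow> (\<lambda>b. x b + y b) \<in> NN m n q"
proof -
  assume x: "x \<in> NN m n q" and y: "y \<in> NN m n q"
  obtain u1 k1 where a1: "u1 \<in> gen_sub m n (vgen m n q)" "k1 \<in> lspan (Krel m n q)" "x = (\<lambda>b. u1 b + k1 b)"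
    using x by (rule NN_E)
  obtain u2 k2 where a2: "u2 \<in> gen_sub m n (vgen m n q)" "k2 \<in> lspan (Krel m n q)" "y = (\<lambda>b. u2 b + k2 b)"
    using y by (rule NN_E)
  note a = a1 a2
  show ?thesis
    by (rule NN_I[OF gen_sub.add[OF a(1) a(4)] lspan_add[OF a(2) a(5)]]) (simp add: a algebra_simps)
qed

lemma NN_smul: "x \<in> NN m n q \<Longrightarrow> (\<lambda>b. c * x b) \<in> NN m n q"
proof -
  assume x: "x \<in> NN m n q"
  obtain u1 k1 where a: "u1 \<in> gen_sub m n (vgen m n q)" "k1 \<in> lspan (Krel m n q)" "x = (\<lambda>b. u1 b + k1 b)"
    using x by (rule NN_E)
  show ?thesis
    by (rule NN_I[OF gen_sub.smul[OF a(1)] lspan_smul[OF a(2)]]) (simp add: a algebra_simps)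
qed

lemma NN_diff: "x \<in> NN m n q \<Longrightarrow> y \<in> NN m n q \<Longrightarrow> (\<lambda>b. x b - y b) \<in> NN m n q"
  using NN_add[of x m n q "\<lambda>b. (-1) * y b"] NN_smul[of y m n q "-1"] by simp

lemma NN_sum: "finite I \<Longrightarrow> (\<And>i. i \<in> I \<Longrightarrow> f i \<in> NN m n q) \<Longrightarrow> (\<lambda>b. \<Sum>i\<in>I. f i b) \<in> NN m n q"
proof (induction I rule: finite_induct)
  case empty then show ?case using NN_zero by simp
next
  case (insert i I)
  have "(\<lambda>b. f i b + (\<Sum>i\<in>I. f i b)) \<in> NN m n q"
    by (rule NN_add) (use insert in auto)
  then show ?case using insert by simp
qed

lemma NN_cancel: "(\<lambda>b. c * x b) \<in> NN m n q \<Longrightarrow> (c::'a::field) \<noteq> 0 \<Longrightarrow> x \<in> NN m n q"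
proof -
  assume a: "(\<lambda>b. c * x b) \<in> NN m n q" "c \<noteq> 0"
  have "(\<lambda>b. inverse c * (c * x b)) = x"
  proof
    fix b show "inverse c * (c * x b) = x b" using a(2) by (metis left_inverse mult_1 mult.assoc)
  qed
  then show ?thesis using NN_smul[OF a(1), of "inverse c"] by simp
qed

definition Xd :: "nat \<Rightarrow> rmon \<Rightarrow> 'a::comm_ring_1 welt" where
  "Xd i \<mu> = ((\<lambda>j \<nu>. if j = i \<and> \<nu> = \<mu> then 1 else 0), (\<lambda>_ _. 0))"
definition XD :: "nat \<Rightarrow> rmon \<Rightarrow> 'a::comm_ring_1 welt" where
  "XD i \<mu> = ((\<lambda>_ _. 0), (\<lambda>j \<nu>. if j = i \<and> \<nu> = \<mu> then 1 else 0))"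

lemma sv_apply: "sv c b b' = (if b' = b then c else 0)" by (simp add: sv_def)
lemma tens_apply: "tens g t (\<nu>, w) = g \<nu> * t w" by (simp add: tens_def)

lemma lin_ext_sup: "finite S \<Longrightarrow> {b. v b \<noteq> 0} \<subseteq> S \<Longrightarrow> lin_ext B v b' = (\<Sum>b\<in>S. v b * B b b')"
  unfolding lin_ext_def by (rule sum.mono_neutral_left) auto

lemma lin_ext_add: "fs u \<Longrightarrow> fs v \<Longrightarrow> lin_ext B (\<lambda>b. u b + v b) = (\<lambda>b'. lin_ext B u b' + lin_ext B v b')"
proof
  fix b'
  assume u: "fs u" and v: "fs v"
  let ?S = "{b. u b \<noteq> 0} \<union> {b. v b \<noteq> 0}"
  have f: "finite ?S" using u v by (simp add: fs_def)
  have "lin_ext B (\<lambda>b. u b + v b) b' = (\<Sum>b\<in>?S. (u b + v b) * B b b')"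
    by (rule lin_ext_sup[OF f]) auto
  also have "\<dots> = (\<Sum>b\<in>?S. u b * B b b') + (\<Sum>b\<in>?S. v b * B b b')"
    by (simp add: distrib_right sum.distrib)
  also have "\<dots> = lin_ext B u b' + lin_ext B v b'"
    using lin_ext_sup[OF f, of u B b'] lin_ext_sup[OF f, of v B b'] by auto
  finally show "lin_ext B (\<lambda>b. u b + v b) b' = lin_ext B u b' + lin_ext B v b'" .
qed

lemma lin_ext_smul: "fs u \<Longrightarrow> lin_ext B (\<lambda>b. c * u b) = (\<lambda>b'. c * lin_ext B u b')"
proof
  fix b'
  assume u: "fs u"
  let ?S = "{b. u b \<noteq> 0}"
  have f: "finite ?S" using u by (simp add: fs_def)
  have "lin_ext B (\<lambda>b. c * u b) b' = (\<Sum>b\<in>?S. (c * u b) * B b b')"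
    by (rule lin_ext_sup[OF f]) auto
  also have "\<dots> = c * lin_ext B u b'"
    by (simp add: lin_ext_def sum_distrib_left mult.assoc)
  finally show "lin_ext B (\<lambda>b. c * u b) b' = c * lin_ext B u b'" .
qed

lemma lin_ext_zero: "lin_ext B (\<lambda>b. 0) = (\<lambda>b'. 0)"
  by (simp add: lin_ext_def)

lemma lin_ext_ind: "lin_ext B (sv 1 b0) = B b0"
proof
  fix b'
  have "lin_ext B (sv 1 b0) b' = (\<Sum>b\<in>{b0}. sv 1 b0 b * B b b')"
    by (rule lin_ext_sup) (auto simp: sv_def)
  then show "lin_ext B (sv 1 b0) b' = B b0 b'" by (simp add: sv_def)
qed

lemma act_Xd: "1 \<le> i \<Longrightarrow> i \<le> m \<Longrightarrow> act m n (Xd i \<mu>) v = lin_ext (act_d m n i \<mu>) v"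
proof
  fix b' assume i: "1 \<le> i" "i \<le> m"
  have s: "{\<nu>. fst (Xd i \<mu> :: 'a welt) j \<nu> \<noteq> 0} = (if j = i then {\<mu>} else {})" for j
    by (auto simp: Xd_def)
  have s2: "{\<nu>. snd (Xd i \<mu> :: 'a welt) j \<nu> \<noteq> 0} = {}" for j
    by (auto simp: Xd_def)
  show "act m n (Xd i \<mu>) v b' = lin_ext (act_d m n i \<mu>) v b'"
    unfolding act_def s s2 using i by (simp add: Xd_def if_distrib[of "\<lambda>S. sum _ S"] cong: if_cong)
qed

lemma act_XD: "1 \<le> i \<Longrightarrow> i \<le> n \<Longrightarrow> act m n (XD i \<mu>) v = lin_ext (act_D m n i \<mu>) v"
proof
  fix b' assume i: "1 \<le> i" "i \<le> n"
  have s: "{\<nu>. snd (XD i \<mu> :: 'a welt) j \<nu> \<noteq> 0} = (if j = i then {\<mu>} else {})" for j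
    by (auto simp: XD_def)
  have s2: "{\<nu>. fst (XD i \<mu> :: 'a welt) j \<nu> \<noteq> 0} = {}" for j
    by (auto simp: XD_def)
  show "act m n (XD i \<mu>) v b' = lin_ext (act_D m n i \<mu>) v b'"
    unfolding act_def s s2 using i by (simp add: XD_def if_distrib[of "\<lambda>S. sum _ S"] cong: if_cong)
qed

lemma valid_Xd: "1 \<le> i \<Longrightarrow> i \<le> m \<Longrightarrow> valid_rmon m n \<mu> \<Longrightarrow> valid_W m n (Xd i \<mu> :: 'a::comm_ring_1 welt)"
  unfolding valid_W_def Xd_def by (auto intro: finite_subset[of _ "{\<mu>}"])

lemma valid_XD: "1 \<le> i \<Longrightarrow> i \<le> n \<Longrightarrow> valid_rmon m n \<mu> \<Longrightarrow> valid_W m n (XD i \<mu> :: 'a::comm_ring_1 welt)"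
  unfolding valid_W_def XD_def by (auto intro: finite_subset[of _ "{\<mu>}"])

definition onem :: rmon where "onem = ((\<lambda>_. 0), {})"
definition ynm :: "nat \<Rightarrow> rmon" where "ynm n = ((\<lambda>_. 0), {n})"

lemma mul_mon_one_r: "mul_mon \<nu> onem = ((1::'a::comm_ring_1), \<nu>)"
  by (simp add: mul_mon_def onem_def)

lemma tens_sv: fixes t :: "nat list \<Rightarrow> 'a::comm_ring_1" shows "tens (sv c \<rho>) t = (\<lambda>x. c * tens (sv 1 \<rho>) t x)"
  by (auto simp: tens_def sv_def fun_eq_iff)

lemma tens_sv0: fixes t :: "nat list \<Rightarrow> 'a::comm_ring_1" shows "tens (sv 0 \<rho>) t = (\<lambda>x. 0)"
  by (auto simp: tens_def sv_def fun_eq_iff)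

lemma tens_zero2: fixes g :: "rmon \<Rightarrow> 'a::comm_ring_1" shows "tens g (\<lambda>_. 0) = (\<lambda>x. 0)"
  by (auto simp: tens_def fun_eq_iff)

lemma lterm_eq: fixes t :: "nat list \<Rightarrow> 'a::comm_ring_1" shows "lterm p \<nu> t = tens (sv (fst p * fst (mul_mon (snd p) \<nu>)) (snd (mul_mon (snd p) \<nu> :: 'a \<times> rmon))) t"
  unfolding lterm_def by (simp add: case_prod_beta)

lemma rterm_eq: fixes t :: "nat list \<Rightarrow> 'a::comm_ring_1" shows "rterm \<mu> p t = tens (sv (fst p * fst (mul_mon \<mu> (snd p))) (snd (mul_mon \<mu> (snd p) :: 'a \<times> rmon))) t"
  unfolding rterm_def by (simp add: case_prod_beta)

lemma lterm_0: fixes t :: "nat list \<Rightarrow> 'a::comm_ring_1" shows "lterm (0, \<rho>) \<nu> t = (\<lambda>x. 0)"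
  by (simp add: lterm_eq tens_sv0)

lemma rterm_0: fixes t :: "nat list \<Rightarrow> 'a::comm_ring_1" shows "rterm \<mu> (0, \<rho>) t = (\<lambda>x. 0)"
  by (simp add: rterm_eq tens_sv0)

lemma mul_mon_one: "mul_mon onem \<nu> = ((1::'a::comm_ring_1), \<nu>)"
  by (simp add: mul_mon_def onem_def)

lemma dx_onem: "dx j onem = ((0::'a::comm_ring_1), onem)"
  by (simp add: dx_def onem_def fun_upd_def)

lemma dx_ynm: "dx j (ynm n) = ((0::'a::comm_ring_1), ynm n)"
  by (simp add: dx_def ynm_def fun_upd_def)

lemma dy_onem: "dy j onem = ((0::'a::comm_ring_1), onem)"
  by (simp add: dy_def onem_def)

lemma dy_ynm: "dy j (ynm n) = (if j = n then ((1::'a::comm_ring_1), onem) else (0, ynm n))"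
proof -
  have c0: "card {s. s = n \<and> s < n} = 0" by simp
  have "(-1::'a) ^ card {s. s = n \<and> s < n} = 1" by (subst c0) simp
  then show ?thesis by (auto simp: dy_def ynm_def onem_def)
qed

lemma rpar_ynm: "rpar (ynm n) = 1" by (simp add: rpar_def ynm_def)

lemma valid_ynm: "1 \<le> n \<Longrightarrow> valid_rmon m n (ynm n)" by (simp add: valid_rmon_def ynm_def)
lemma valid_onem: "valid_rmon m n onem" by (simp add: valid_rmon_def onem_def)

lemma valid_dx: "valid_rmon m n \<nu> \<Longrightarrow> valid_rmon m n (snd (dx i \<nu>))"
  by (auto simp: valid_rmon_def dx_def split: if_splits)

lemma valid_dy: "valid_rmon m n \<nu> \<Longrightarrow> valid_rmon m n (snd (dy i \<nu>))"
  by (auto simp: valid_rmon_def dy_def split: if_splits)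

lemma valid_mul: "valid_rmon m n \<mu> \<Longrightarrow> valid_rmon m n \<nu> \<Longrightarrow> valid_rmon m n (snd (mul_mon \<mu> \<nu>))"
  by (auto simp: valid_rmon_def mul_mon_def split: if_splits)

lemma act_D_yn: "1 \<le> n \<Longrightarrow> act_D m n n onem (ynm n, w) = tens (sv 1 onem) (sv (1::'a::comm_ring_1) w)"
  by (simp add: act_D_def dy_ynm mul_mon_one rterm_eq dx_onem dy_onem lterm_0 mul_mon_one_r)

lemma tens_ind: "tens (sv 1 \<nu>) (sv (1::'a::comm_ring_1) w) = sv 1 (\<nu>, w)"
  by (auto simp: tens_def sv_def fun_eq_iff)

lemma xi_rep: assumes "a \<noteq> m + n"
  shows "xi m a b (replicate q (m + n)) = (if a = b then sv (if a \<le> m then 1 else -1) (replicate q (m+n)) else (\<lambda>_. (0::'a::comm_ring_1)))"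
proof -
  have e: "{k. k < length (replicate q (m + n)) \<and> replicate q (m + n) ! k = a \<and> w' = (replicate q (m + n))[k := b]} = {}" for w'
    using assms by auto
  show ?thesis unfolding xi_def e by (auto simp: sv_def fun_eq_iff)
qed

lemma step_ii_act:
  fixes \<alpha> :: "nat \<Rightarrow> nat" and S :: "nat set"
  assumes m: "1 \<le> m" and n: "1 \<le> n"
  defines "\<nu>0 \<equiv> ((\<lambda>_. 0), S \<inter> {n})"
  defines "\<mu> \<equiv> (\<alpha>(1 := \<alpha> 1 + 1), S - {n})"
  shows "\<exists>c. c \<noteq> 0 \<and> act_d m n 1 \<mu> (\<nu>0, replicate q (m+n)) = tens (sv c (\<alpha>, S)) (sv (1::'a::field_char_0) (replicate q (m+n)))"
proof -
  let ?w = "replicate q (m+n)"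
  have t1: "rterm \<mu> (dx 1 \<nu>0) (sv 1 ?w) = (\<lambda>_. (0::'a))"
    by (simp add: \<nu>0_def dx_def rterm_0)
  have t2: "lterm (dx j \<mu>) \<nu>0 (xi m j 1 ?w) b' = (if j = 1 then lterm (dx 1 \<mu>) \<nu>0 (sv (1::'a) ?w) b' else 0)"
    if "j \<in> {1..m}" for j b'
  proof -
    have "j \<noteq> m + n" using that n by auto
    then show ?thesis using that m
      by (auto simp: xi_rep lterm_eq tens_zero2)
  qed
  have t3: "lterm (dy j \<mu>) \<nu>0 (xi m (m + j) 1 ?w) b' = (0::'a)"
    if "j \<in> {1..n}" for j b'
  proof (cases "j = n")
    case True
    then have "dy j \<mu> = ((0::'a), \<mu>)" by (simp add: dy_def \<mu>_def)
    then show ?thesis by (simp add: lterm_0)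
  next
    case False
    then have "m + j \<noteq> m + n" "m + j \<noteq> 1" using that m by auto
    then show ?thesis by (simp add: xi_rep lterm_eq tens_zero2)
  qed
  have dx1: "dx 1 \<mu> = (of_nat (\<alpha> 1 + 1), (\<alpha>, S - {n}))"
    by (simp add: dx_def \<mu>_def)
  have mm: "mul_mon (\<alpha>, S - {n}) \<nu>0 = ((-1::'a) ^ card {(s,t). s \<in> S - {n} \<and> t \<in> S \<inter> {n} \<and> t < s}, (\<alpha>, S))"
    by (auto simp: mul_mon_def \<nu>0_def)
  let ?c = "(of_nat (\<alpha> 1 + 1) :: 'a) * (-1::'a) ^ card {(s,t). s \<in> S - {n} \<and> t \<in> S \<inter> {n} \<and> t < s}"
  have "(of_nat (\<alpha> 1 + 1)::'a) \<noteq> 0" by (simp only: of_nat_eq_0_iff)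
  then have cnz: "?c \<noteq> 0" by simp
  have "act_d m n 1 \<mu> (\<nu>0, ?w) = tens (sv ?c (\<alpha>, S)) (sv (1::'a) ?w)"
  proof
    fix b'
    have "act_d m n 1 \<mu> (\<nu>0, ?w) b' = (\<Sum>j\<in>{1..m}. (if j = 1 then lterm (dx 1 \<mu>) \<nu>0 (sv (1::'a) ?w) b' else 0))"
      unfolding act_d_def using t1 t2 t3 by simp
    also have "\<dots> = lterm (dx 1 \<mu>) \<nu>0 (sv (1::'a) ?w) b'"
      using m by simp
    also have "\<dots> = tens (sv ?c (\<alpha>, S)) (sv (1::'a) ?w) b'"
      by (simp only: lterm_eq dx1 fst_conv snd_conv mm)
    finally show "act_d m n 1 \<mu> (\<nu>0, ?w) b' = tens (sv ?c (\<alpha>, S)) (sv (1::'a) ?w) b'" .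
  qed
  then show ?thesis using cnz by blast
qed

lemma gen_cancel: "(\<lambda>b. c * x b) \<in> gen_sub m n v0 \<Longrightarrow> (c::'a::field) \<noteq> 0 \<Longrightarrow> x \<in> gen_sub m n v0"
proof -
  assume a: "(\<lambda>b. c * x b) \<in> gen_sub m n v0" "c \<noteq> 0"
  have "(\<lambda>b. inverse c * (c * x b)) = x"
  proof
    fix b show "inverse c * (c * x b) = x b" using a(2) by (metis left_inverse mult_1 mult.assoc)
  qed
  then show ?thesis using gen_sub.smul[OF a(1), of "inverse c"] by simp
qed

lemma base_gen:
  assumes m: "1 \<le> m" and n: "1 \<le> n" and g: "valid_rmon m n g"
  shows "(sv 1 (g, replicate q (m+n)) :: bidx \<Rightarrow> 'a::field_char_0) \<in> gen_sub m n (vgen m n q)"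
proof -
  let ?w = "replicate q (m+n)"
  let ?G = "gen_sub m n (vgen m n q) :: (bidx \<Rightarrow> 'a) set"
  obtain \<alpha> S where gS: "g = (\<alpha>, S)" by (cases g)
  have v0: "vgen m n q = (sv 1 (ynm n, ?w) :: bidx \<Rightarrow> 'a)"
    by (simp add: vgen_def ynm_def tens_ind)
  have y_in: "(sv 1 (ynm n, ?w) :: bidx \<Rightarrow> 'a) \<in> ?G"
  proof -
    have "(vgen m n q :: bidx \<Rightarrow> 'a) \<in> ?G" by (rule gen_sub.base)
    then show ?thesis using v0 by simp
  qed
  have vX: "valid_W m n (XD n onem :: 'a welt)"
    using valid_XD[of n n m onem] n valid_onem by simp
  have "act m n (XD n onem) (sv 1 (ynm n, ?w) :: bidx \<Rightarrow> 'a) \<in> ?G"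
    by (rule gen_sub.action[OF y_in vX])
  moreover have "act m n (XD n onem) (sv 1 (ynm n, ?w) :: bidx \<Rightarrow> 'a) = sv 1 (onem, ?w)"
    using n by (simp add: act_XD lin_ext_ind act_D_yn tens_ind)
  ultimately have o_in: "(sv 1 (onem, ?w) :: bidx \<Rightarrow> 'a) \<in> ?G" by simp
  define \<nu>0 where "\<nu>0 = (((\<lambda>_. 0), S \<inter> {n}) :: rmon)"
  have n0_in: "(sv 1 (\<nu>0, ?w) :: bidx \<Rightarrow> 'a) \<in> ?G"
  proof (cases "n \<in> S")
    case True then have "\<nu>0 = ynm n" by (auto simp: \<nu>0_def ynm_def)
    then show ?thesis using y_in by simp
  next
    case False then have "\<nu>0 = onem" by (auto simp: \<nu>0_def onem_def)
    then show ?thesis using o_in by simp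
  qed
  define \<mu> where "\<mu> = (\<alpha>(1 := \<alpha> 1 + 1), S - {n})"
  have vmu: "valid_rmon m n \<mu>"
  proof -
    have "\<forall>i. \<alpha> i \<noteq> 0 \<longrightarrow> 1 \<le> i \<and> i \<le> m" "S \<subseteq> {1..n}" using g unfolding gS valid_rmon_def by auto
    then show ?thesis using m unfolding \<mu>_def valid_rmon_def by (auto simp: fun_upd_def)
  qed
  have "\<exists>c. c \<noteq> 0 \<and> act_d m n 1 \<mu> (\<nu>0, ?w) = tens (sv c (\<alpha>, S)) (sv (1::'a) ?w)"
    unfolding \<nu>0_def \<mu>_def by (rule step_ii_act[OF m n])
  then obtain c where c: "c \<noteq> 0" "act_d m n 1 \<mu> (\<nu>0, ?w) = tens (sv c (\<alpha>, S)) (sv (1::'a) ?w)"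
    by blast
  have vX2: "valid_W m n (Xd 1 \<mu> :: 'a welt)"
    using valid_Xd[of 1 m n \<mu>] m vmu by simp
  have "act m n (Xd 1 \<mu>) (sv 1 (\<nu>0, ?w) :: bidx \<Rightarrow> 'a) \<in> ?G"
    by (rule gen_sub.action[OF n0_in vX2])
  moreover have "act m n (Xd 1 \<mu>) (sv 1 (\<nu>0, ?w) :: bidx \<Rightarrow> 'a) = (\<lambda>x. c * sv 1 (g, ?w) x)"
  proof -
    have "act m n (Xd 1 \<mu>) (sv 1 (\<nu>0, ?w) :: bidx \<Rightarrow> 'a) = act_d m n 1 \<mu> (\<nu>0, ?w)"
      using m by (simp add: act_Xd lin_ext_ind)
    also have "\<dots> = (\<lambda>x. c * tens (sv 1 (\<alpha>, S)) (sv (1::'a) ?w) x)"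
      unfolding c(2) by (rule tens_sv)
    finally show ?thesis by (simp add: tens_ind gS)
  qed
  ultimately have "(\<lambda>x. c * sv 1 (g, ?w) x) \<in> ?G" by simp
  then show ?thesis using gen_cancel c(1) by blast
qed

definition sgnx :: "nat \<Rightarrow> nat \<Rightarrow> nat \<Rightarrow> nat \<Rightarrow> 'a::comm_ring_1" where
  "sgnx m a b p = - ((-1) ^ ((vpar m a + vpar m b) * (vpar m a + p)))"

definition XIp :: "nat \<Rightarrow> nat \<Rightarrow> nat \<Rightarrow> nat \<Rightarrow> nat list \<Rightarrow> nat list \<Rightarrow> 'a::comm_ring_1" where
  "XIp m a b p w = (\<lambda>w'. \<Sum>k<length w. if w ! k = a then sgnx m a b (p + (\<Sum>l<k. vpar m (w ! l))) * sv 1 (w[k := b]) w' else 0)"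

definition consf :: "nat \<Rightarrow> (nat list \<Rightarrow> 'a::comm_ring_1) \<Rightarrow> nat list \<Rightarrow> 'a" where
  "consf x f = (\<lambda>w'. case w' of [] \<Rightarrow> 0 | y # u \<Rightarrow> if y = x then f u else 0)"

definition relw :: "nat \<Rightarrow> nat list \<Rightarrow> nat \<Rightarrow> nat \<Rightarrow> nat list \<Rightarrow> nat list \<Rightarrow> 'a::comm_ring_1" where
  "relw m A c d E = (\<lambda>w'. (if w' = A @ [c, d] @ E then 1 else 0)
            + (if w' = A @ [d, c] @ E then (-1) ^ (vpar m c * vpar m d) else 0))"

definition RWn :: "nat \<Rightarrow> nat \<Rightarrow> nat \<Rightarrow> (nat list \<Rightarrow> 'a::comm_ring_1) set" where
  "RWn m n L = {relw m A c d E | A c d E. length A + length E + 2 = L \<and> set (A @ [c, d] @ E) \<subseteq> {1..m+n}}"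

lemma xi_XIp_pt: "a \<noteq> b \<Longrightarrow> (XIp m a b 0 w w' :: 'a::comm_ring_1) = xi m a b w w'"
proof -
  assume ab: "a \<noteq> b"
  have "XIp m a b 0 w w' = (\<Sum>k\<in>{k\<in>{..<length w}. w ! k = a \<and> w' = w[k := b]}. sgnx m a b (\<Sum>l<k. vpar m (w ! l)) :: 'a)"
    unfolding XIp_def by (subst sum.inter_filter) (simp, rule sum.cong, simp, simp add: sv_def)
  also have "\<dots> = xi m a b w w'"
    unfolding xi_def using ab by (simp add: sgnx_def)
  finally show ?thesis .
qed

lemma xi_XIp: "a \<noteq> b \<Longrightarrow> xi m a b w = (XIp m a b 0 w :: nat list \<Rightarrow> 'a::comm_ring_1)"
  by (rule ext, rule xi_XIp_pt[symmetric])

lemma sv_Cons: "sv (1::'a::comm_ring_1) (x # u) = consf x (sv 1 u)"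
  by (auto simp: sv_def consf_def fun_eq_iff split: list.splits)

lemma consf_sum: "consf x (\<lambda>w'. \<Sum>k\<in>K. g k w') = (\<lambda>w'. \<Sum>k\<in>K. consf x (g k) w')"
  by (auto simp: consf_def fun_eq_iff split: list.splits)

lemma consf_if: "consf x (\<lambda>w'. if P then c * g w' else 0) = (\<lambda>w'. if P then c * consf x g w' else 0)"
  by (auto simp: consf_def fun_eq_iff split: list.splits)

lemma XIp_Cons_pt: "(XIp m a b p (x # w) w' :: 'a::comm_ring_1) = (if x = a then sgnx m a b p * sv 1 (b # w) w' else 0)
    + consf x (XIp m a b (p + vpar m x) w) w'"
proof -
  have pre: "(\<Sum>l<Suc k. vpar m ((x # w) ! l)) = vpar m x + (\<Sum>l<k. vpar m (w ! l))" for k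
    by (subst sum.lessThan_Suc_shift) simp
  have "(XIp m a b p (x # w) w' :: 'a) = (if x = a then sgnx m a b p * sv 1 (b # w) w' else 0)
     + (\<Sum>k<length w. if w ! k = a then sgnx m a b (p + (vpar m x + (\<Sum>l<k. vpar m (w ! l)))) * sv 1 (x # w[k := b]) w' else (0::'a))"
    unfolding XIp_def
    apply (simp only: length_Cons)
    apply (subst sum.lessThan_Suc_shift)
    apply (simp del: sum.lessThan_Suc)
    apply (rule sum.cong)
     apply (simp_all only: pre)
    apply simp
    done
  also have "\<dots> = (if x = a then sgnx m a b p * sv 1 (b # w) w' else 0) + consf x (XIp m a b (p + vpar m x) w) w'"
    unfolding XIp_def sv_Cons consf_sum consf_if by (simp add: ac_simps cong: if_cong)
  finally show ?thesis .
qed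

lemma XIp_Cons: "XIp m a b p (x # w) = (\<lambda>w'. (if x = a then sgnx m a b p * sv 1 (b # w) w' else 0)
    + consf x (XIp m a b (p + vpar m x) w) w' :: 'a::comm_ring_1)"
  by (rule ext, rule XIp_Cons_pt)


lemma m1p: "(-1::'a::comm_ring_1) ^ k = (if even k then 1 else -1)"
  by (simp add: neg_one_even_power neg_one_odd_power)

lemma vpar01: "vpar m x = 0 \<or> vpar m x = 1" by (simp add: vpar_def)

lemma relw_sv: "relw m A c d E = (\<lambda>w'. sv 1 (A @ c # d # E) w' + (-1) ^ (vpar m c * vpar m d) * sv (1::'a::comm_ring_1) (A @ d # c # E) w')"
  by (auto simp: relw_def sv_def fun_eq_iff)

lemma RWn_I: "length A + length E + 2 = L \<Longrightarrow> set (A @ [c, d] @ E) \<subseteq> {1..m+n} \<Longrightarrow> relw m A c d E \<in> RWn m n L"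
  unfolding RWn_def by blast

lemma consf_add: "consf x (\<lambda>w'. f w' + g w') = (\<lambda>w'. consf x f w' + consf x g w')"
  by (auto simp: consf_def fun_eq_iff split: list.splits)
lemma consf_smul: "consf x (\<lambda>w'. c * f w') = (\<lambda>w'. c * consf x f w')"
  by (auto simp: consf_def fun_eq_iff split: list.splits)
lemma consf_zero: "consf x (\<lambda>w'. 0) = (\<lambda>w'. 0)"
  by (auto simp: consf_def fun_eq_iff split: list.splits)
lemma consf_relw: "consf x (relw m A c d E) = (relw m (x # A) c d E :: nat list \<Rightarrow> 'a::comm_ring_1)"
  by (simp add: relw_sv consf_add consf_smul sv_Cons)

lemma consf_lspan: "f \<in> lspan (RWn m n L) \<Longrightarrow> x \<in> {1..m+n} \<Longrightarrow> consf x f \<in> lspan (RWn m n (Suc L))"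
proof (induction f rule: lspan.induct)
  case zero then show ?case by (simp add: consf_zero lspan.zero)
next
  case (comb v y c)
  from comb.hyps(1) obtain A c' d E where v: "v = relw m A c' d E" "length A + length E + 2 = L" "set (A @ [c', d] @ E) \<subseteq> {1..m+n}"
    unfolding RWn_def by blast
  have "consf x v \<in> RWn m n (Suc L)"
    unfolding v(1) consf_relw by (rule RWn_I) (use v comb.prems in auto)
  then show ?case
    unfolding consf_add consf_smul using lspan.comb comb.IH comb.prems by blast
qed

lemma swap_part:
  assumes c: "c \<in> {1..m+n}" and d: "d \<in> {1..m+n}" and E: "set E \<subseteq> {1..m+n}" and b: "b \<in> {1..m+n}"
  shows "(\<lambda>w'. consf c (consf d (XIp m a b p E)) w' + (-1) ^ (vpar m c * vpar m d) * consf d (consf c (XIp m a b p E)) w')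
     \<in> lspan (RWn m n (length E + 2) :: (nat list \<Rightarrow> 'a::comm_ring_1) set)"
proof -
  let ?s = "\<lambda>k. sgnx m a b (p + (\<Sum>l<k. vpar m (E ! l))) :: 'a"
  have cc: "consf x (consf y (XIp m a b p E)) = (\<lambda>w'. \<Sum>k<length E. if E ! k = a then ?s k * sv 1 (x # y # E[k := b]) w' else 0)" for x y
    unfolding XIp_def consf_sum consf_if sv_Cons ..
  have eq: "(\<lambda>w'. consf c (consf d (XIp m a b p E)) w' + (-1) ^ (vpar m c * vpar m d) * consf d (consf c (XIp m a b p E)) w')
    = (\<lambda>w'. \<Sum>k<length E. if E ! k = a then ?s k * relw m [] c d (E[k := b]) w' else 0)"
    unfolding cc relw_sv by (auto simp: fun_eq_iff sum_distrib_left sum.distrib[symmetric] algebra_simps intro!: sum.cong)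
  show ?thesis unfolding eq
  proof (rule lspan_sum[OF finite_lessThan])
    fix k assume k: "k \<in> {..<length E}"
    have "relw m [] c d (E[k := b]) \<in> RWn m n (length E + 2)"
      by (rule RWn_I) (use c d E b k set_update_subset_insert[of E k b] in auto)
    then have "(\<lambda>w'. ?s k * relw m [] c d (E[k := b]) w') \<in> lspan (RWn m n (length E + 2))"
      by (intro lspan_smul lspan_base)
    then show "(\<lambda>w'. if E ! k = a then ?s k * relw m [] c d (E[k := b]) w' else 0) \<in> lspan (RWn m n (length E + 2))"
      by (cases "E ! k = a") (simp_all add: lspan.zero)
  qed
qed


lemma sid1: "vpar m a = 1 \<Longrightarrow> (-1::'a::comm_ring_1) ^ (vpar m a * vpar m d) * sgnx m a b (p + vpar m d) = sgnx m a b p * (-1) ^ (vpar m b * vpar m d)"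
  using vpar01[of m b] vpar01[of m d] by (auto simp: sgnx_def m1p)

lemma sid2: "vpar m a = 1 \<Longrightarrow> (sgnx m a b (p + vpar m c) :: 'a::comm_ring_1) = (-1) ^ (vpar m c * vpar m a) * sgnx m a b p * (-1) ^ (vpar m b * vpar m c)"
  using vpar01[of m b] vpar01[of m c] by (auto simp: sgnx_def m1p)

lemma rel_nil:
  assumes va: "vpar m a = 1" and c: "c \<in> {1..m+n}" and d: "d \<in> {1..m+n}" and E: "set E \<subseteq> {1..m+n}" and b: "b \<in> {1..m+n}"
  shows "(\<lambda>w'. XIp m a b p (c # d # E) w' + (-1) ^ (vpar m c * vpar m d) * XIp m a b p (d # c # E) w')
     \<in> lspan (RWn m n (length E + 2) :: (nat list \<Rightarrow> 'a::comm_ring_1) set)"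
proof -
  let ?F = "XIp m a b (p + vpar m c + vpar m d) E :: nat list \<Rightarrow> 'a"
  let ?e = "(-1::'a) ^ (vpar m c * vpar m d)"
  have e1: "(XIp m a b p (c#d#E) :: nat list \<Rightarrow> 'a) = (\<lambda>w'. (if c = a then sgnx m a b p * sv 1 (b#d#E) w' else 0)
     + ((if d = a then sgnx m a b (p + vpar m c) * sv 1 (c#b#E) w' else 0) + consf c (consf d ?F) w'))"
    by (simp add: XIp_Cons consf_add consf_if sv_Cons[symmetric] cong: if_cong)
  have e2: "(XIp m a b p (d#c#E) :: nat list \<Rightarrow> 'a) = (\<lambda>w'. (if d = a then sgnx m a b p * sv 1 (b#c#E) w' else 0)
     + ((if c = a then sgnx m a b (p + vpar m d) * sv 1 (d#b#E) w' else 0) + consf d (consf c ?F) w'))"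
  proof -
    have pp: "p + vpar m d + vpar m c = p + vpar m c + vpar m d" by simp
    have "(XIp m a b p (d#c#E) :: nat list \<Rightarrow> 'a) = (\<lambda>w'. (if d = a then sgnx m a b p * sv 1 (b#c#E) w' else 0)
     + ((if c = a then sgnx m a b (p + vpar m d) * sv 1 (d#b#E) w' else 0) + consf d (consf c (XIp m a b (p + vpar m d + vpar m c) E)) w'))"
      by (simp add: XIp_Cons consf_add consf_if sv_Cons[symmetric] cong: if_cong)
    then show ?thesis unfolding pp .
  qed
  have h1: "(\<lambda>w'. if c = a then sgnx m a b p * relw m [] b d E w' else (0::'a)) \<in> lspan (RWn m n (length E + 2))"
  proof (cases "c = a")
    case True
    have "relw m [] b d E \<in> RWn m n (length E + 2)" by (rule RWn_I) (use b d E in auto)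
    then show ?thesis using True lspan_smul[OF lspan_base, of "relw m [] b d E" _ "sgnx m a b p"] by simp
  qed (simp add: lspan.zero)
  have h2: "(\<lambda>w'. if d = a then ?e * sgnx m a b p * relw m [] b c E w' else (0::'a)) \<in> lspan (RWn m n (length E + 2))"
  proof (cases "d = a")
    case True
    have "relw m [] b c E \<in> RWn m n (length E + 2)" by (rule RWn_I) (use b c E in auto)
    then show ?thesis using True lspan_smul[OF lspan_base, of "relw m [] b c E" _ "?e * sgnx m a b p"] by (simp add: mult.assoc)
  qed (simp add: lspan.zero)
  note h3 = swap_part[OF c d E b, of a "p + vpar m c + vpar m d", where 'a='a]
  have eq: "(\<lambda>w'. XIp m a b p (c # d # E) w' + ?e * XIp m a b p (d # c # E) w')
    = (\<lambda>w'. (if c = a then sgnx m a b p * relw m [] b d E w' else 0) + ((if d = a then ?e * sgnx m a b p * relw m [] b c E w' else 0)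
       + (consf c (consf d ?F) w' + ?e * consf d (consf c ?F) w')))"
  proof
    fix w'
    have s1: "?e * sgnx m a b (p + vpar m d) = sgnx m a b p * (-1) ^ (vpar m b * vpar m d)" if "c = a"
      using sid1[OF va, of d b p] that by simp
    have s2: "sgnx m a b (p + vpar m c) = ?e * sgnx m a b p * (-1) ^ (vpar m b * vpar m c)" if "d = a"
      using sid2[OF va, of b p c] that by (simp add: mult.commute)
    have "?e * ?e = 1" by (simp add: power_mult_distrib[symmetric] power_add[symmetric] m1p)
    show "XIp m a b p (c # d # E) w' + ?e * XIp m a b p (d # c # E) w'
      = (if c = a then sgnx m a b p * relw m [] b d E w' else 0) + ((if d = a then ?e * sgnx m a b p * relw m [] b c E w' else 0)
       + (consf c (consf d ?F) w' + ?e * consf d (consf c ?F) w'))"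
      unfolding e1 e2 relw_sv
      using vpar01[of m b] vpar01[of m c] vpar01[of m d]
      by (cases "c = a"; cases "d = a") (auto simp: sgnx_def m1p va algebra_simps)
  qed
  show ?thesis unfolding eq by (intro lspan_add h1 h2 h3)
qed


lemma rel_gen:
  assumes va: "vpar m a = 1" and L: "set (A @ [c, d] @ E) \<subseteq> {1..m+n}" and b: "b \<in> {1..m+n}"
  shows "(\<lambda>w'. XIp m a b p (A @ c # d # E) w' + (-1) ^ (vpar m c * vpar m d) * XIp m a b p (A @ d # c # E) w')
     \<in> lspan (RWn m n (length A + length E + 2) :: (nat list \<Rightarrow> 'a::comm_ring_1) set)"
  using L
proof (induction A arbitrary: p)
  case Nil
  then show ?case using rel_nil[OF va _ _ _ b, of c d E p] by simp
next
  case (Cons x A)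
  let ?e = "(-1::'a) ^ (vpar m c * vpar m d)"
  have x: "x \<in> {1..m+n}" and L': "set (A @ [c, d] @ E) \<subseteq> {1..m+n}" using Cons.prems by auto
  have eq: "(\<lambda>w'. XIp m a b p ((x # A) @ c # d # E) w' + ?e * XIp m a b p ((x # A) @ d # c # E) w')
    = (\<lambda>w'. (if x = a then sgnx m a b p * relw m (b # A) c d E w' else 0)
       + consf x (\<lambda>w'. XIp m a b (p + vpar m x) (A @ c # d # E) w' + ?e * XIp m a b (p + vpar m x) (A @ d # c # E) w') w')"
    by (auto simp: XIp_Cons consf_add consf_smul relw_sv algebra_simps fun_eq_iff)
  have h1: "(\<lambda>w'. if x = a then sgnx m a b p * relw m (b # A) c d E w' else (0::'a))
      \<in> lspan (RWn m n (length (x # A) + length E + 2))"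
  proof (cases "x = a")
    case True
    have "relw m (b # A) c d E \<in> RWn m n (length (x # A) + length E + 2)" by (rule RWn_I) (use b L' in auto)
    then show ?thesis using True lspan_smul[OF lspan_base, of "relw m (b # A) c d E" _ "sgnx m a b p"] by simp
  qed (simp add: lspan.zero)
  have h2: "consf x (\<lambda>w'. XIp m a b (p + vpar m x) (A @ c # d # E) w' + ?e * XIp m a b (p + vpar m x) (A @ d # c # E) w')
      \<in> lspan (RWn m n (length (x # A) + length E + 2))"
    using consf_lspan[OF Cons.IH[OF L'] x] by simp
  show ?case unfolding eq by (rule lspan_add[OF h1 h2])
qed

definition Yop :: "nat \<Rightarrow> nat \<Rightarrow> nat \<Rightarrow> 'a::comm_ring_1 welt" where
  "Yop m n b = (if b \<le> m then Xd b (ynm n) else XD (b - m) (ynm n))"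

definition Rd :: "nat \<Rightarrow> nat \<Rightarrow> rmon \<Rightarrow> 'a::comm_ring_1 \<times> rmon" where
  "Rd m b \<nu> = (if b \<le> m then dx b \<nu> else dy (b - m) \<nu>)"

definition sY :: "nat \<Rightarrow> nat \<Rightarrow> rmon \<Rightarrow> 'a::comm_ring_1" where
  "sY m b \<nu> = (if b \<le> m then (-1) ^ rpar \<nu> else 1)"

definition BY :: "nat \<Rightarrow> nat \<Rightarrow> nat \<Rightarrow> bidx \<Rightarrow> bidx \<Rightarrow> 'a::comm_ring_1" where
  "BY m n b = (\<lambda>(\<nu>, w) b'. rterm (ynm n) (Rd m b \<nu>) (sv 1 w) b' + sY m b \<nu> * tens (sv 1 \<nu>) (xi m (m + n) b w) b')"

lemma sum_dy_ynm:
  assumes n: "1 \<le> n"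
  shows "(\<Sum>j\<in>{1..n}. lterm (dy j (ynm n)) \<nu> (f j) b') = tens (sv 1 \<nu>) (f n) b' * (1::'a::comm_ring_1)"
proof -
  have "(\<Sum>j\<in>{1..n}. lterm (dy j (ynm n)) \<nu> (f j) b') = (\<Sum>j\<in>{1..n}. if j = n then tens (sv 1 \<nu>) (f n) b' else (0::'a))"
    by (rule sum.cong) (auto simp: dy_ynm lterm_0 lterm_eq mul_mon_one tens_sv0)
  also have "\<dots> = tens (sv 1 \<nu>) (f n) b'" using n by simp
  finally show ?thesis by simp
qed

lemma sum_dx_ynm: "(\<Sum>j\<in>{1..m}. lterm (dx j (ynm n)) \<nu> (f j) b') = (0::'a::comm_ring_1)"
  by (simp add: dx_ynm lterm_0)

lemma act_d_yn: "1 \<le> n \<Longrightarrow> act_d m n b (ynm n) (\<nu>, w) = (\<lambda>b'. rterm (ynm n) (dx b \<nu>) (sv 1 w) b' + (-1) ^ rpar \<nu> * tens (sv 1 \<nu>) (xi m (m + n) b w) b' :: 'a::comm_ring_1)"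
proof
  fix b' assume n: "1 \<le> n"
  have s: "(-1::'a) ^ (rpar (ynm n) + rpar \<nu> + 1) = (-1) ^ rpar \<nu>"
    by (simp add: rpar_ynm power_add)
  show "act_d m n b (ynm n) (\<nu>, w) b' = rterm (ynm n) (dx b \<nu>) (sv 1 w) b' + (-1) ^ rpar \<nu> * tens (sv 1 \<nu>) (xi m (m + n) b w) b'"
    unfolding act_d_def prod.case by (simp only: sum_dx_ynm sum_dy_ynm[OF n] s) (simp add: rpar_ynm)
qed

lemma act_D_yn2: "1 \<le> n \<Longrightarrow> act_D m n j (ynm n) (\<nu>, w) = (\<lambda>b'. rterm (ynm n) (dy j \<nu>) (sv 1 w) b' + tens (sv 1 \<nu>) (xi m (m + n) (m + j) w) b' :: 'a::comm_ring_1)"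
proof
  fix b' assume n: "1 \<le> n"
  have s: "(-1::'a) ^ (rpar (ynm n) + 1) = 1"
    by (simp add: rpar_ynm)
  show "act_D m n j (ynm n) (\<nu>, w) b' = rterm (ynm n) (dy j \<nu>) (sv 1 w) b' + tens (sv 1 \<nu>) (xi m (m + n) (m + j) w) b'"
    unfolding act_D_def prod.case by (simp only: sum_dx_ynm sum_dy_ynm[OF n] s) (simp add: rpar_ynm)
qed

lemma actY: assumes "1 \<le> b" "b < m + n" "1 \<le> n"
  shows "act m n (Yop m n b) v = lin_ext (BY m n b :: bidx \<Rightarrow> bidx \<Rightarrow> 'a::comm_ring_1) v"
proof (cases "b \<le> m")
  case True
  have "act_d m n b (ynm n) = (BY m n b :: bidx \<Rightarrow> bidx \<Rightarrow> 'a)"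
    using assms True by (auto simp: fun_eq_iff BY_def act_d_yn Rd_def sY_def)
  then show ?thesis using True assms by (simp add: Yop_def act_Xd)
next
  case False
  have "act_D m n (b - m) (ynm n) = (BY m n b :: bidx \<Rightarrow> bidx \<Rightarrow> 'a)"
    using assms False by (auto simp: fun_eq_iff BY_def act_D_yn2 Rd_def sY_def)
  then show ?thesis using False assms by (simp add: Yop_def act_XD)
qed

lemma validY: assumes "1 \<le> b" "b < m + n" "1 \<le> n"
  shows "valid_W m n (Yop m n b :: 'a::comm_ring_1 welt)"
proof (cases "b \<le> m")
  case True then show ?thesis using assms valid_Xd[of b m n "ynm n"] valid_ynm[of n m] by (simp add: Yop_def)
next
  case False
  have "1 \<le> b - m" "b - m \<le> n" using False assms by auto
  then show ?thesis using False assms valid_XD[of "b - m" n m "ynm n"] valid_ynm[of n m] by (simp add: Yop_def)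
qed


definition XL :: "nat \<Rightarrow> nat \<Rightarrow> nat \<Rightarrow> (nat list \<Rightarrow> 'a::comm_ring_1) \<Rightarrow> nat list \<Rightarrow> 'a" where
  "XL m n b f = (\<lambda>w'. \<Sum>w\<in>{w. f w \<noteq> 0}. f w * xi m (m + n) b w w')"

lemma lin_ext_tens:
  assumes f: "fs f"
  shows "lin_ext B (tens (sv 1 \<nu>) f) b' = (\<Sum>w\<in>{w. f w \<noteq> 0}. f w * B (\<nu>, w) b' :: 'a::comm_ring_1)"
proof -
  have fin: "finite (Pair \<nu> ` {w. f w \<noteq> 0})" using f by (simp add: fs_def)
  have "lin_ext B (tens (sv 1 \<nu>) f) b' = (\<Sum>x\<in>Pair \<nu> ` {w. f w \<noteq> 0}. tens (sv 1 \<nu>) f x * B x b')"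
    by (rule lin_ext_sup[OF fin]) (auto simp: tens_def sv_def split: if_splits)
  also have "\<dots> = (\<Sum>w\<in>{w. f w \<noteq> 0}. tens (sv 1 \<nu>) f (\<nu>, w) * B (\<nu>, w) b')"
    by (subst sum.reindex) (auto simp: inj_on_def)
  also have "\<dots> = (\<Sum>w\<in>{w. f w \<noteq> 0}. f w * B (\<nu>, w) b')"
    by (simp add: tens_def sv_def)
  finally show ?thesis .
qed

lemma sum_sv:
  assumes f: "fs f"
  shows "(\<Sum>w\<in>{w. f w \<noteq> 0}. f w * sv 1 w w') = (f w' :: 'a::comm_ring_1)"
proof -
  have "(\<Sum>w\<in>{w. f w \<noteq> 0}. f w * sv 1 w w') = (\<Sum>w\<in>{w. f w \<noteq> 0}. if w' = w then f w else 0)"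
    by (rule sum.cong) (auto simp: sv_def)
  also have "\<dots> = f w'" using f by (simp add: fs_def)
  finally show ?thesis .
qed

lemma valid_Rd: "valid_rmon m n \<nu> \<Longrightarrow> valid_rmon m n (snd (Rd m b \<nu>))"
  by (simp add: Rd_def valid_dx valid_dy)

lemma rterm_form:
  assumes n: "1 \<le> n" and v: "valid_rmon m n \<nu>"
  shows "\<exists>C \<rho>. valid_rmon m n \<rho> \<and> (\<forall>t. rterm (ynm n) (Rd m b \<nu>) t = (\<lambda>x. C * tens (sv 1 \<rho>) t x :: 'a::comm_ring_1))"
proof -
  let ?M = "mul_mon (ynm n) (snd (Rd m b \<nu> :: 'a \<times> rmon)) :: 'a \<times> rmon"
  have "valid_rmon m n (snd ?M)" by (rule valid_mul[OF valid_ynm[OF n] valid_Rd[OF v]])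
  moreover have "\<forall>t. rterm (ynm n) (Rd m b \<nu>) t = (\<lambda>x. (fst (Rd m b \<nu> :: 'a \<times> rmon) * fst ?M) * tens (sv 1 (snd ?M)) t x :: 'a)"
    by (simp add: rterm_eq tens_sv[symmetric])
  ultimately show ?thesis by blast
qed

lemma BY_tens:
  assumes n: "1 \<le> n" and v: "valid_rmon m n \<nu>" and f: "fs f"
  shows "\<exists>C \<rho>. valid_rmon m n \<rho> \<and> lin_ext (BY m n b) (tens (sv 1 \<nu>) f)
     = (\<lambda>x. C * tens (sv 1 \<rho>) f x + sY m b \<nu> * tens (sv 1 \<nu>) (XL m n b f) x :: 'a::comm_ring_1)"
proof -
  obtain C \<rho> where r: "valid_rmon m n \<rho>" "\<And>t. rterm (ynm n) (Rd m b \<nu>) t = (\<lambda>x. C * tens (sv 1 \<rho>) t x :: 'a)"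
    using rterm_form[OF n v, of b] by blast
  have "lin_ext (BY m n b) (tens (sv 1 \<nu>) f) = (\<lambda>x. C * tens (sv 1 \<rho>) f x + sY m b \<nu> * tens (sv 1 \<nu>) (XL m n b f) x :: 'a)"
  proof
    fix x :: bidx
    obtain \<rho>' w' where x: "x = (\<rho>', w')" by (cases x)
    have "lin_ext (BY m n b) (tens (sv 1 \<nu>) f) x = (\<Sum>w\<in>{w. f w \<noteq> 0}. f w * BY m n b (\<nu>, w) x)"
      by (rule lin_ext_tens[OF f])
    also have "\<dots> = (\<Sum>w\<in>{w. f w \<noteq> 0}. (C * sv 1 \<rho> \<rho>') * (f w * sv 1 w w') + (sY m b \<nu> * sv 1 \<nu> \<rho>') * (f w * xi m (m + n) b w w'))"
      by (rule sum.cong) (simp_all add: BY_def r(2) x tens_def algebra_simps)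
    also have "\<dots> = (C * sv 1 \<rho> \<rho>') * (\<Sum>w\<in>{w. f w \<noteq> 0}. f w * sv 1 w w') + (sY m b \<nu> * sv 1 \<nu> \<rho>') * (\<Sum>w\<in>{w. f w \<noteq> 0}. f w * xi m (m + n) b w w')"
      by (simp add: sum.distrib sum_distrib_left)
    also have "\<dots> = C * tens (sv 1 \<rho>) f x + sY m b \<nu> * tens (sv 1 \<nu>) (XL m n b f) x"
      by (simp add: sum_sv[OF f] x tens_def XL_def algebra_simps)
    finally show "lin_ext (BY m n b) (tens (sv 1 \<nu>) f) x = C * tens (sv 1 \<rho>) f x + sY m b \<nu> * tens (sv 1 \<nu>) (XL m n b f) x" .
  qed
  then show ?thesis using r(1) by blast
qed

lemma Krel_eq: "Krel m n q = {tens (sv 1 \<nu>) (relw m A c d E) | \<nu> A c d E. valid_rmon m n \<nu> \<and> length A + length E + 2 = q \<and> set (A @ [c, d] @ E) \<subseteq> {1..m+n}}"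
  by (simp add: Krel_def relw_def)

lemma Krel_I: "valid_rmon m n \<nu> \<Longrightarrow> length A + length E + 2 = q \<Longrightarrow> set (A @ [c, d] @ E) \<subseteq> {1..m+n} \<Longrightarrow> tens (sv 1 \<nu>) (relw m A c d E) \<in> Krel m n q"
  unfolding Krel_eq by blast

lemma tens_add: "tens (sv 1 \<nu>) (\<lambda>w. f w + g w) = (\<lambda>x. tens (sv 1 \<nu>) f x + tens (sv 1 \<nu>) g x :: 'a::comm_ring_1)"
  by (auto simp: tens_def fun_eq_iff algebra_simps)
lemma tens_smul: "tens (sv 1 \<nu>) (\<lambda>w. c * f w) = (\<lambda>x. c * tens (sv 1 \<nu>) f x :: 'a::comm_ring_1)"
  by (rule ext) (simp add: tens_def split_def mult.left_commute)

lemma tens_lspan: "f \<in> lspan (RWn m n q) \<Longrightarrow> valid_rmon m n \<nu> \<Longrightarrow> tens (sv 1 \<nu>) f \<in> lspan (Krel m n q :: (bidx \<Rightarrow> 'a::comm_ring_1) set)"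
proof (induction f rule: lspan.induct)
  case zero then show ?case by (simp add: tens_zero2 lspan.zero)
next
  case (comb v x c)
  from comb.hyps(1) obtain A c' d E where v: "v = relw m A c' d E" "length A + length E + 2 = q" "set (A @ [c', d] @ E) \<subseteq> {1..m+n}"
    unfolding RWn_def by blast
  have "tens (sv 1 \<nu>) v \<in> Krel m n q" unfolding v(1) by (rule Krel_I) (use v comb.prems in auto)
  then show ?case unfolding tens_add tens_smul by (rule lspan.comb[OF _ comb.IH[OF comb.prems]])
qed

lemma relw_nz: "relw m A c d E w \<noteq> (0::'a::comm_ring_1) \<Longrightarrow> w = A @ [c, d] @ E \<or> w = A @ [d, c] @ E"
  by (auto simp: relw_def split: if_splits)

lemma fs_relw: "fs (relw m A c d E :: nat list \<Rightarrow> 'a::comm_ring_1)"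
proof -
  have "{w. relw m A c d E w \<noteq> (0::'a)} \<subseteq> {A @ [c, d] @ E, A @ [d, c] @ E}"
    using relw_nz by blast
  then show ?thesis unfolding fs_def by (rule finite_subset) simp
qed

lemma fs_tens: "fs f \<Longrightarrow> fs (tens (sv 1 \<nu>) f :: bidx \<Rightarrow> 'a::comm_ring_1)"
proof -
  assume f: "fs f"
  have "{x. tens (sv 1 \<nu>) f x \<noteq> (0::'a)} \<subseteq> Pair \<nu> ` {w. f w \<noteq> 0}"
  proof
    fix x assume x: "x \<in> {x. tens (sv 1 \<nu>) f x \<noteq> (0::'a)}"
    obtain \<rho> w where xw: "x = (\<rho>, w)" by (cases x)
    have "\<rho> = \<nu>" "f w \<noteq> 0" using x unfolding xw by (auto simp: tens_def sv_def split: if_splits)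
    then show "x \<in> Pair \<nu> ` {w. f w \<noteq> 0}" unfolding xw by blast
  qed
  moreover have "finite (Pair \<nu> ` {w. f w \<noteq> 0})" using f by (simp add: fs_def)
  ultimately show ?thesis unfolding fs_def by (rule finite_subset)
qed

lemma fs_Krel: "k \<in> Krel m n q \<Longrightarrow> fs k"
proof -
  assume "k \<in> Krel m n q"
  then obtain \<nu> A c d E where "k = tens (sv 1 \<nu>) (relw m A c d E)" unfolding Krel_eq by blast
  then show ?thesis using fs_tens[OF fs_relw] by simp
qed

lemma fs_lspanK: "k \<in> lspan (Krel m n q) \<Longrightarrow> fs k"
  by (erule lspan_fs) (erule fs_Krel)

lemma XL_sup: "finite S \<Longrightarrow> {w. f w \<noteq> 0} \<subseteq> S \<Longrightarrow> XL m n b f w' = (\<Sum>w\<in>S. f w * xi m (m + n) b w w')"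
  unfolding XL_def by (rule sum.mono_neutral_left) auto

lemma XL_relw: "XL m n b (relw m A c d E) = (\<lambda>w'. xi m (m + n) b (A @ c # d # E) w' + (-1) ^ (vpar m c * vpar m d) * xi m (m + n) b (A @ d # c # E) w' :: 'a::comm_ring_1)"
proof
  fix w'
  let ?w1 = "A @ c # d # E" and ?w2 = "A @ d # c # E"
  let ?e = "(-1::'a) ^ (vpar m c * vpar m d)"
  have sub: "{w. relw m A c d E w \<noteq> (0::'a)} \<subseteq> {?w1, ?w2}"
    using relw_nz by fastforce
  show "XL m n b (relw m A c d E) w' = xi m (m + n) b ?w1 w' + ?e * xi m (m + n) b ?w2 w'"
  proof (cases "c = d")
    case True
    have "XL m n b (relw m A c d E) w' = (\<Sum>w\<in>{?w1}. relw m A c d E w * xi m (m + n) b w w' :: 'a)"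
      by (rule XL_sup) (use sub True in auto)
    also have "\<dots> = (1 + ?e) * xi m (m + n) b ?w1 w'" using True by (simp add: relw_def)
    finally show ?thesis using True by (simp add: algebra_simps)
  next
    case False
    then have ne: "?w1 \<noteq> ?w2" by simp
    have "XL m n b (relw m A c d E) w' = (\<Sum>w\<in>{?w1, ?w2}. relw m A c d E w * xi m (m + n) b w w' :: 'a)"
      by (rule XL_sup) (use sub in auto)
    also have "\<dots> = relw m A c d E ?w1 * xi m (m + n) b ?w1 w' + relw m A c d E ?w2 * xi m (m + n) b ?w2 w'"
      using ne by simp
    also have "relw m A c d E ?w1 = (1::'a)" using ne by (simp add: relw_def)
    also have "relw m A c d E ?w2 = ?e" using ne by (simp add: relw_def)
    finally show ?thesis by simp
  qed
qed

lemma Krel_inv: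
  assumes n: "1 \<le> n" and b: "1 \<le> b" "b < m + n" and k: "\<kappa> \<in> Krel m n q"
  shows "lin_ext (BY m n b) \<kappa> \<in> lspan (Krel m n q :: (bidx \<Rightarrow> 'a::comm_ring_1) set)"
proof -
  obtain \<nu> A c d E where kk: "\<kappa> = tens (sv 1 \<nu>) (relw m A c d E)" "valid_rmon m n \<nu>"
      "length A + length E + 2 = q" "set (A @ [c, d] @ E) \<subseteq> {1..m+n}"
    using k unfolding Krel_eq by blast
  obtain C \<rho> where r: "valid_rmon m n \<rho>" "lin_ext (BY m n b) (tens (sv 1 \<nu>) (relw m A c d E))
     = (\<lambda>x. C * tens (sv 1 \<rho>) (relw m A c d E) x + sY m b \<nu> * tens (sv 1 \<nu>) (XL m n b (relw m A c d E)) x :: 'a)"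
    using BY_tens[OF n kk(2) fs_relw, of b] by blast
  have h1: "tens (sv 1 \<rho>) (relw m A c d E) \<in> lspan (Krel m n q :: (bidx \<Rightarrow> 'a) set)"
    by (rule lspan_base, rule Krel_I[OF r(1) kk(3) kk(4)])
  have va: "vpar m (m + n) = 1" using n by (simp add: vpar_def)
  have bT: "m + n \<noteq> b" using b by simp
  have "XL m n b (relw m A c d E) = (\<lambda>w'. XIp m (m+n) b 0 (A @ c # d # E) w' + (-1) ^ (vpar m c * vpar m d) * XIp m (m+n) b 0 (A @ d # c # E) w' :: 'a)"
    unfolding XL_relw xi_XIp[OF bT] ..
  moreover have "(\<lambda>w'. XIp m (m+n) b 0 (A @ c # d # E) w' + (-1) ^ (vpar m c * vpar m d) * XIp m (m+n) b 0 (A @ d # c # E) w' :: 'a)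
      \<in> lspan (RWn m n (length A + length E + 2))"
    by (rule rel_gen[OF va kk(4)]) (use b in auto)
  ultimately have "XL m n b (relw m A c d E) \<in> lspan (RWn m n q :: (nat list \<Rightarrow> 'a) set)" using kk(3) by simp
  then have h2: "tens (sv 1 \<nu>) (XL m n b (relw m A c d E)) \<in> lspan (Krel m n q :: (bidx \<Rightarrow> 'a) set)"
    by (rule tens_lspan[OF _ kk(2)])
  show ?thesis unfolding kk(1) r(2) by (rule lspan_add[OF lspan_smul[OF h1] lspan_smul[OF h2]])
qed

lemma fs_smul: "fs v \<Longrightarrow> fs (\<lambda>b. c * v b :: 'a::comm_ring_1)"
proof -
  assume v: "fs v"
  have "{b. c * v b \<noteq> (0::'a)} \<subseteq> {b. v b \<noteq> 0}" by auto
  then show ?thesis using v unfolding fs_def by (rule finite_subset)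
qed

lemma fs_diff: "fs u \<Longrightarrow> fs v \<Longrightarrow> fs (\<lambda>b. u b - v b :: 'a::comm_ring_1)"
proof -
  assume u: "fs u" and v: "fs v"
  have "{b. u b - v b \<noteq> (0::'a)} \<subseteq> {b. u b \<noteq> 0} \<union> {b. v b \<noteq> 0}" by auto
  moreover have "finite ({b. u b \<noteq> 0} \<union> {b. v b \<noteq> 0})" using u v by (simp add: fs_def)
  ultimately show ?thesis unfolding fs_def by (rule finite_subset)
qed

lemma linY_lspan:
  assumes n: "1 \<le> n" and b: "1 \<le> b" "b < m + n"
  shows "k \<in> lspan (Krel m n q) \<Longrightarrow> lin_ext (BY m n b) k \<in> lspan (Krel m n q :: (bidx \<Rightarrow> 'a::comm_ring_1) set)"
proof (induction k rule: lspan.induct)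
  case zero then show ?case by (simp add: lin_ext_zero lspan.zero)
next
  case (comb v x c)
  have fv: "fs v" by (rule fs_Krel[OF comb.hyps(1)])
  have fx: "fs x" by (rule fs_lspanK[OF comb.hyps(2)])
  have "lin_ext (BY m n b) (\<lambda>y. c * v y + x y) = (\<lambda>y. lin_ext (BY m n b) (\<lambda>y. c * v y) y + lin_ext (BY m n b) x y)"
    by (rule lin_ext_add[OF fs_smul[OF fv] fx])
  also have "\<dots> = (\<lambda>y. c * lin_ext (BY m n b) v y + lin_ext (BY m n b) x y)"
    by (simp add: lin_ext_smul[OF fv])
  finally show ?case
    by (simp only:) (rule lspan_add[OF lspan_smul[OF Krel_inv[OF n b comb.hyps(1)]] comb.IH])
qed

lemma NN_actY:
  assumes v: "v \<in> NN m n q" and fv: "fs v" and n: "1 \<le> n" and b: "1 \<le> b" "b < m + n"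
  shows "act m n (Yop m n b) v \<in> NN m n q"
proof -
  obtain u k where uk: "u \<in> gen_sub m n (vgen m n q)" "k \<in> lspan (Krel m n q)" "v = (\<lambda>x. u x + k x)"
    using v by (rule NN_E)
  have fk: "fs k" by (rule fs_lspanK[OF uk(2)])
  have "u = (\<lambda>x. v x - k x)" using uk(3) by auto
  then have fu: "fs u" using fs_diff[OF fv fk] by simp
  have "act m n (Yop m n b) v = lin_ext (BY m n b) (\<lambda>x. u x + k x)"
    using actY[OF b n] uk(3) by simp
  also have "\<dots> = (\<lambda>y. lin_ext (BY m n b) u y + lin_ext (BY m n b) k y)"
    by (rule lin_ext_add[OF fu fk])
  finally have eq: "act m n (Yop m n b) v = (\<lambda>y. act m n (Yop m n b) u y + lin_ext (BY m n b) k y)"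
    using actY[OF b n, of u] by simp
  have g: "act m n (Yop m n b) u \<in> gen_sub m n (vgen m n q)"
    by (rule gen_sub.action[OF uk(1) validY[OF b n]])
  show ?thesis unfolding eq
    by (rule NN_add[OF NN_gen[OF g] NN_lspan[OF linY_lspan[OF n b uk(2)]]])
qed

lemma rep_update: "k < r \<Longrightarrow> (replicate r x)[k := y] = replicate k x @ y # replicate (r - 1 - k) x"
proof (induction k arbitrary: r)
  case 0 then show ?case by (cases r) auto
next
  case (Suc k) then show ?case by (cases r) auto
qed

lemma Krel_swap:
  assumes v: "valid_rmon m n \<nu>" and q: "length A + length E + 2 = q" and L: "set (A @ [c, d] @ E) \<subseteq> {1..m+n}"
  shows "(\<lambda>x. sv 1 (\<nu>, A @ c # d # E) x + (-1) ^ (vpar m c * vpar m d) * sv 1 (\<nu>, A @ d # c # E) x) \<in> (Krel m n q :: (bidx \<Rightarrow> 'a::comm_ring_1) set)"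
proof -
  have "tens (sv 1 \<nu>) (relw m A c d E) \<in> (Krel m n q :: (bidx \<Rightarrow> 'a) set)" by (rule Krel_I[OF v q L])
  moreover have "tens (sv 1 \<nu>) (relw m A c d E) = (\<lambda>x. sv 1 (\<nu>, A @ c # d # E) x + (-1) ^ (vpar m c * vpar m d) * sv (1::'a) (\<nu>, A @ d # c # E) x)"
    unfolding relw_sv tens_add tens_smul tens_ind by simp
  ultimately show ?thesis by simp
qed

lemma move_b:
  assumes v: "valid_rmon m n \<nu>" and b: "b \<in> {1..m+n}" and s: "set s \<subseteq> {1..m+n}" and n: "1 \<le> n"
  shows "k + 1 + j + length s = q \<Longrightarrow>
    (\<lambda>x. sv 1 (\<nu>, replicate k (m+n) @ b # replicate j (m+n) @ s) x
       - (- ((-1) ^ (vpar m b * vpar m (m+n)))) ^ j * sv 1 (\<nu>, replicate (k + j) (m+n) @ b # s) x)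
     \<in> lspan (Krel m n q :: (bidx \<Rightarrow> 'a::comm_ring_1) set)"
proof (induction j arbitrary: k)
  case 0 then show ?case by (simp add: lspan.zero)
next
  case (Suc j)
  let ?T = "m + n"
  let ?e = "- ((-1::'a) ^ (vpar m b * vpar m ?T))"
  let ?X = "sv 1 (\<nu>, replicate k ?T @ b # ?T # replicate j ?T @ s) :: bidx \<Rightarrow> 'a"
  let ?Y = "sv 1 (\<nu>, replicate (Suc k) ?T @ b # replicate j ?T @ s) :: bidx \<Rightarrow> 'a"
  let ?Z = "sv 1 (\<nu>, replicate (Suc k + j) ?T @ b # s) :: bidx \<Rightarrow> 'a"
  have K: "(\<lambda>x. ?X x + (-1) ^ (vpar m b * vpar m ?T) * ?Y x) \<in> Krel m n q"
  proof -
    have "(\<lambda>x. sv 1 (\<nu>, replicate k ?T @ b # ?T # (replicate j ?T @ s)) x + (-1) ^ (vpar m b * vpar m ?T) * sv (1::'a) (\<nu>, replicate k ?T @ ?T # b # (replicate j ?T @ s)) x) \<in> Krel m n q"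
      by (rule Krel_swap[OF v]) (use Suc.prems b s n in auto)
    moreover have "replicate k ?T @ ?T # b # (replicate j ?T @ s) = replicate (Suc k) ?T @ b # replicate j ?T @ s"
      by (simp add: replicate_append_same[symmetric])
    ultimately show ?thesis by simp
  qed
  have D: "(\<lambda>x. ?Y x - ?e ^ j * ?Z x) \<in> lspan (Krel m n q)"
    using Suc.IH[of "Suc k"] Suc.prems by simp
  have "(\<lambda>x. ?X x - ?e ^ Suc j * ?Z x) = (\<lambda>x. (?X x + (-1) ^ (vpar m b * vpar m ?T) * ?Y x) + ?e * (?Y x - ?e ^ j * ?Z x))"
    by (simp add: fun_eq_iff algebra_simps)
  moreover have "(\<lambda>x. (?X x + (-1) ^ (vpar m b * vpar m ?T) * ?Y x) + ?e * (?Y x - ?e ^ j * ?Z x)) \<in> lspan (Krel m n q)"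
    by (rule lspan_add[OF lspan_base[OF K] lspan_smul[OF D]])
  ultimately show ?case by simp
qed

lemma fs_sv: "fs (sv (1::'a::comm_ring_1) x)"
proof -
  have "{y. sv (1::'a) x y \<noteq> 0} \<subseteq> {x}" by (auto simp: sv_def split: if_splits)
  then show ?thesis unfolding fs_def by (rule finite_subset) simp
qed

lemma tens_XIp: "tens (sv 1 \<nu>) (XIp m a b p w) = (\<lambda>x. \<Sum>k<length w. if w ! k = a then sgnx m a b (p + (\<Sum>l<k. vpar m (w ! l))) * sv 1 (\<nu>, w[k := b]) x else (0::'a::comm_ring_1))"
proof
  fix x :: bidx
  obtain \<rho> w' where x: "x = (\<rho>, w')" by (cases x)
  show "tens (sv 1 \<nu>) (XIp m a b p w) x = (\<Sum>k<length w. if w ! k = a then sgnx m a b (p + (\<Sum>l<k. vpar m (w ! l))) * sv 1 (\<nu>, w[k := b]) x else (0::'a))"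
    unfolding x tens_def XIp_def by (simp add: sum_distrib_left sv_def cong: if_cong)
qed

lemma coef_term:
  assumes n: "1 \<le> n" and k: "k < r"
  shows "sgnx m (m + n) b k * (- ((-1::'a::comm_ring_1) ^ (vpar m b * vpar m (m + n)))) ^ (r - 1 - k) = - ((-1) ^ ((1 + vpar m b) * r))"
proof -
  define j where "j = r - 1 - k"
  have j: "r = k + 1 + j" using k unfolding j_def by simp
  have va: "vpar m (m + n) = 1" using n by (simp add: vpar_def)
  have rj: "r - 1 - k = j" unfolding j_def ..
  show ?thesis
  proof (cases "vpar m b = 0")
    case True
    have "(-1::'a) ^ (1 + k) * (-1) ^ j = (-1) ^ (k + 1 + j)" by (simp add: power_add[symmetric])
    then show ?thesis unfolding rj sgnx_def va True j by simp
  next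
    case False
    then have vb: "vpar m b = 1" using vpar01[of m b] by simp
    have e1: "(-1::'a) ^ (2 * x) = 1" for x by (simp add: power_mult)
    show ?thesis unfolding rj sgnx_def va vb by (simp add: e1)
  qed
qed


lemma step_main:
  fixes \<nu> :: rmon and s :: "nat list"
  assumes m: "1 \<le> m" and n: "1 \<le> n" and r: "1 \<le> r" and s: "set s \<subseteq> {1..m+n}"
    and q: "r + length s = q" and b: "b \<in> {1..m+n}" and v: "valid_rmon m n \<nu>"
    and IH: "\<And>\<nu>' s'. valid_rmon m n \<nu>' \<Longrightarrow> length s' = length s \<Longrightarrow> set s' \<subseteq> {1..m+n}
       \<Longrightarrow> (sv 1 (\<nu>', replicate r (m+n) @ s') :: bidx \<Rightarrow> 'a::field_char_0) \<in> NN m n q"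
  shows "(sv 1 (\<nu>, replicate (r - 1) (m+n) @ b # s) :: bidx \<Rightarrow> 'a) \<in> NN m n q"
proof (cases "b = m + n")
  case True
  have eq: "replicate (r - 1) (m+n) @ b # s = replicate r (m+n) @ s"
    using r True by (cases r) (simp_all add: replicate_append_same[symmetric])
  show ?thesis unfolding eq by (rule IH[OF v refl s])
next
  case False
  let ?T = "m + n"
  let ?w = "replicate r ?T @ s"
  have b1: "1 \<le> b" and b2: "b < m + n" using b False by auto
  have W: "(sv 1 (\<nu>, ?w) :: bidx \<Rightarrow> 'a) \<in> NN m n q" by (rule IH[OF v refl s])
  have A1: "act m n (Yop m n b) (sv 1 (\<nu>, ?w) :: bidx \<Rightarrow> 'a) \<in> NN m n q"
    by (rule NN_actY[OF W fs_sv n b1 b2])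
  have A2: "act m n (Yop m n b) (sv 1 (\<nu>, ?w) :: bidx \<Rightarrow> 'a) = BY m n b (\<nu>, ?w)"
    by (simp add: actY[OF b1 b2 n] lin_ext_ind)
  obtain C \<rho> where Cr: "valid_rmon m n \<rho>" "\<And>t. rterm (ynm n) (Rd m b \<nu>) t = (\<lambda>x. C * tens (sv 1 \<rho>) t x :: 'a)"
    using rterm_form[OF n v, of b] by blast
  let ?X = "tens (sv 1 \<nu>) (xi m ?T b ?w) :: bidx \<Rightarrow> 'a"
  have A3: "BY m n b (\<nu>, ?w) = (\<lambda>x. C * sv 1 (\<rho>, ?w) x + sY m b \<nu> * ?X x)"
    by (simp add: BY_def Cr(2) tens_ind)
  have R: "(\<lambda>x. C * sv 1 (\<rho>, ?w) x :: 'a) \<in> NN m n q" by (rule NN_smul[OF IH[OF Cr(1) refl s]])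
  have "(\<lambda>x. sY m b \<nu> * ?X x) = (\<lambda>x. BY m n b (\<nu>, ?w) x - C * sv 1 (\<rho>, ?w) x)"
    unfolding A3 by simp
  also have "\<dots> \<in> NN m n q" using NN_diff[OF A1 R] unfolding A2 .
  finally have "(\<lambda>x. sY m b \<nu> * ?X x) \<in> NN m n q" .
  moreover have "sY m b \<nu> \<noteq> (0::'a)" by (simp add: sY_def)
  ultimately have X: "?X \<in> NN m n q" by (rule NN_cancel)
  have bT: "?T \<noteq> b" using False by simp
  let ?f = "\<lambda>k x. if ?w ! k = ?T then sgnx m ?T b (0 + (\<Sum>l<k. vpar m (?w ! l))) * sv 1 (\<nu>, ?w[k := b]) x else (0::'a)"
  have X2: "?X = (\<lambda>x. \<Sum>k<length ?w. ?f k x)"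
    unfolding xi_XIp[OF bT] tens_XIp ..
  have split: "{..<length ?w} = {..<r} \<union> {r..<r + length s}" by auto
  have X3: "?X x = (\<Sum>k<r. ?f k x) + (\<Sum>k\<in>{r..<r + length s}. ?f k x)" for x
    unfolding X2 split by (subst sum.union_disjoint) auto
  have G: "(\<lambda>x. \<Sum>k\<in>{r..<r + length s}. ?f k x) \<in> NN m n q"
  proof (rule NN_sum[OF finite_atLeastLessThan])
    fix k assume k: "k \<in> {r..<r + length s}"
    then have k1: "?w ! k = s ! (k - r)" "?w[k := b] = replicate r ?T @ s[k - r := b]"
      by (auto simp: nth_append list_update_append)
    have "(sv 1 (\<nu>, replicate r ?T @ s[k - r := b]) :: bidx \<Rightarrow> 'a) \<in> NN m n q"
      by (rule IH[OF v]) (use s b set_update_subset_insert[of s "k - r" b] in auto)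
    then have "(\<lambda>x. c * sv 1 (\<nu>, replicate r ?T @ s[k - r := b]) x :: 'a) \<in> NN m n q" for c
      by (rule NN_smul)
    then show "?f k \<in> NN m n q"
      unfolding k1 by (cases "s ! (k - r) = ?T") (simp_all add: NN_zero)
  qed
  let ?e = "- ((-1::'a) ^ (vpar m b * vpar m ?T))"
  let ?tgt = "sv 1 (\<nu>, replicate (r - 1) ?T @ b # s) :: bidx \<Rightarrow> 'a"
  let ?D = "\<lambda>k x. sv 1 (\<nu>, replicate k ?T @ b # replicate (r - 1 - k) ?T @ s) x - ?e ^ (r - 1 - k) * ?tgt x"
  have va: "vpar m ?T = 1" using n by (simp add: vpar_def)
  have head: "?f k x = sgnx m ?T b k * (?e ^ (r - 1 - k) * ?tgt x + ?D k x)" if k: "k < r" for k x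
  proof -
    have "?w ! k = ?T" using k by (simp add: nth_append)
    moreover have "(\<Sum>l<k. vpar m (?w ! l)) = k" using k va by (simp add: nth_append)
    moreover have "?w[k := b] = replicate k ?T @ b # replicate (r - 1 - k) ?T @ s"
      using k by (simp add: list_update_append rep_update)
    ultimately show ?thesis by simp
  qed
  have Dl: "?D k \<in> lspan (Krel m n q)" if k: "k < r" for k
  proof -
    have "k + (r - 1 - k) = r - 1" using k by simp
    then show ?thesis using move_b[OF v _ s n, of b k "r - 1 - k" q] b k q by simp
  qed
  have H: "(\<lambda>x. \<Sum>k<r. sgnx m ?T b k * ?D k x) \<in> NN m n q"
    by (rule NN_sum[OF finite_lessThan]) (rule NN_smul[OF NN_lspan[OF Dl]], simp)
  let ?coef = "\<Sum>k<r. sgnx m ?T b k * ?e ^ (r - 1 - k)"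
  have "(\<lambda>x. ?coef * ?tgt x) = (\<lambda>x. ?X x - (\<Sum>k\<in>{r..<r + length s}. ?f k x) - (\<Sum>k<r. sgnx m ?T b k * ?D k x))"
  proof
    fix x
    have "(\<Sum>k<r. ?f k x) = (\<Sum>k<r. sgnx m ?T b k * (?e ^ (r - 1 - k) * ?tgt x + ?D k x))"
      by (rule sum.cong) (simp_all add: head)
    also have "\<dots> = (\<Sum>k<r. (sgnx m ?T b k * ?e ^ (r - 1 - k)) * ?tgt x) + (\<Sum>k<r. sgnx m ?T b k * ?D k x)"
      by (simp only: distrib_left sum.distrib mult.assoc)
    also have "\<dots> = ?coef * ?tgt x + (\<Sum>k<r. sgnx m ?T b k * ?D k x)"
      by (simp only: sum_distrib_right)
    finally show "?coef * ?tgt x = ?X x - (\<Sum>k\<in>{r..<r + length s}. ?f k x) - (\<Sum>k<r. sgnx m ?T b k * ?D k x)"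
      unfolding X3 by simp
  qed
  moreover have "(\<lambda>x. ?X x - (\<Sum>k\<in>{r..<r + length s}. ?f k x) - (\<Sum>k<r. sgnx m ?T b k * ?D k x)) \<in> NN m n q"
    by (rule NN_diff[OF NN_diff[OF X G] H])
  ultimately have CT: "(\<lambda>x. ?coef * ?tgt x) \<in> NN m n q" by simp
  have "?coef = (\<Sum>k<r. - ((-1) ^ ((1 + vpar m b) * r)))"
    by (rule sum.cong) (rule refl, rule coef_term[OF n], simp)
  also have "\<dots> = of_nat r * (- ((-1::'a) ^ ((1 + vpar m b) * r)))" by simp
  finally have "?coef \<noteq> 0" using r by (simp add: m1p)
  then show ?thesis using NN_cancel[OF CT] by simp
qed

lemma all_words:
  assumes m: "1 \<le> m" and n: "1 \<le> n"
  shows "L \<le> q \<Longrightarrow> \<forall>s \<nu>. length s = L \<longrightarrow> set s \<subseteq> {1..m+n} \<longrightarrow> valid_rmon m n \<nu> \<longrightarrow>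
     (sv 1 (\<nu>, replicate (q - L) (m+n) @ s) :: bidx \<Rightarrow> 'a::field_char_0) \<in> NN m n q"
proof (induction L)
  case 0
  show ?case
  proof (intro allI impI)
    fix s :: "nat list" and \<nu> assume "length s = 0" "set s \<subseteq> {1..m+n}" "valid_rmon m n \<nu>"
    then show "(sv 1 (\<nu>, replicate (q - 0) (m+n) @ s) :: bidx \<Rightarrow> 'a) \<in> NN m n q"
      using NN_gen[OF base_gen[OF m n, of \<nu> q]] by simp
  qed
next
  case (Suc L)
  have Lq: "L \<le> q" using Suc.prems by simp
  show ?case
  proof (intro allI impI)
    fix s :: "nat list" and \<nu> assume s: "length s = Suc L" "set s \<subseteq> {1..m+n}" and v: "valid_rmon m n \<nu>"
    obtain b s' where bs: "s = b # s'" using s(1) by (cases s) auto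
    have r: "1 \<le> q - L" using Suc.prems by simp
    have e: "q - Suc L = q - L - 1" by simp
    have "(sv 1 (\<nu>, replicate (q - L - 1) (m+n) @ b # s') :: bidx \<Rightarrow> 'a) \<in> NN m n q"
    proof (rule step_main[OF m n r _ _ _ v])
      show "set s' \<subseteq> {1..m+n}" using s(2) bs by simp
      show "q - L + length s' = q" using s(1) bs Suc.prems by simp
      show "b \<in> {1..m+n}" using s(2) bs by simp
      fix \<nu>' s'' assume a: "valid_rmon m n \<nu>'" "length s'' = length s'" "set s'' \<subseteq> {1..m+n}"
      have "length s'' = L" using a(2) s(1) bs by simp
      then show "(sv 1 (\<nu>', replicate (q - L) (m+n) @ s'') :: bidx \<Rightarrow> 'a) \<in> NN m n q"
        using Suc.IH[OF Lq, rule_format, of s'' \<nu>'] a(1,3) by blast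
    qed
    then show "(sv 1 (\<nu>, replicate (q - Suc L) (m+n) @ s) :: bidx \<Rightarrow> 'a) \<in> NN m n q"
      unfolding e bs .
  qed
qed

theorem mainTheorem10:
  fixes m n q :: nat
  assumes "m \<ge> 1" and "n \<ge> 1"
    and alg_closed: "\<forall>p :: 'a::field_char_0 poly. degree p > 0 \<longrightarrow> (\<exists>x. poly p x = 0)"
  shows "\<forall>v \<in> (Mcar m n q :: (bidx \<Rightarrow> 'a) set).
           \<exists>u \<in> gen_sub m n (vgen m n q). \<exists>k \<in> lspan (Krel m n q). v = (\<lambda>b. u b + k b)"
proof
  fix v assume v: "v \<in> (Mcar m n q :: (bidx \<Rightarrow> 'a) set)"
  have fin: "fs v" using v by (simp add: Mcar_def fs_def)
  have eq: "v = (\<lambda>x. \<Sum>y\<in>{y. v y \<noteq> 0}. v y * sv 1 y x)"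
    using sum_sv[OF fin] by auto
  have "(\<lambda>x. \<Sum>y\<in>{y. v y \<noteq> 0}. v y * sv 1 y x) \<in> NN m n q"
  proof (rule NN_sum)
    show "finite {y. v y \<noteq> 0}" using fin by (simp add: fs_def)
    fix y assume y: "y \<in> {y. v y \<noteq> 0}"
    obtain \<nu> w where yw: "y = (\<nu>, w)" by (cases y)
    have all: "\<forall>b. v b \<noteq> 0 \<longrightarrow> valid_rmon m n (fst b) \<and> length (snd b) = q \<and> set (snd b) \<subseteq> {1..m+n}"
      using v unfolding Mcar_def by blast
    have "v y \<noteq> 0" using y by simp
    then have c: "valid_rmon m n \<nu>" "length w = q" "set w \<subseteq> {1..m+n}"
      using all[rule_format, of y] unfolding yw fst_conv snd_conv by auto
    have "(sv 1 (\<nu>, replicate (q - q) (m+n) @ w) :: bidx \<Rightarrow> 'a) \<in> NN m n q"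
      using all_words[OF assms(1,2), of q q] c by blast
    then have "(sv 1 y :: bidx \<Rightarrow> 'a) \<in> NN m n q" unfolding yw by simp
    then show "(\<lambda>x. v y * sv 1 y x) \<in> NN m n q" by (rule NN_smul)
  qed
  then have "v \<in> NN m n q" using eq by simp
  then show "\<exists>u \<in> gen_sub m n (vgen m n q). \<exists>k \<in> lspan (Krel m n q). v = (\<lambda>b. u b + k b)"
    unfolding NN_def by blast
qed

end
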